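(* The category $\mathbf{AlgFrm}$ of algebraic frames and coherent frame homomorphisms is dually equivalent to the category $\mathbf{AlgLPries}$ of algebraic L-spaces and coherent L-morphisms.
   Context: A frame is a complete lattice satisfying $a\wedge\bigvee S=\bigvee\{a\wedge s\mid s\in S\}$; frame homomorphisms preserve finite meets and arbitrary joins. In a frame $L$, $a\ll b$ means whenever $b\le\bigvee S$ there is finite $T\subseteq S$ with $a\le\bigvee T$; $a$ is compact if $a\ll a$; $K(L)$ is the set of compact elements. $L$ is algebraic if $a=\bigvee\{b\in K(L)\mid b\le a\}$ for all $a$. A frame homomorphism is coherent if it maps compact elements to compact elements. A Priestley space is a Stone space $X$ with a partial order such that clopen upsets separate points. An L-space is a Priestley space in which the downset of each clopen set is clopen and the closure of each open upset is open. ${\sf ClopUp}(X)$ is the set of clopen upsets; $\mathrm{cl}$ denotes closure. An L-morphism is a continuous order-preserving map $f:X\to X'$ between L-spaces with $f^{-1}(\mathrm{cl}\,U)=\mathrm{cl}\,f^{-1}(U)$ for every open upset $U$ of $X'$. The spatial part of $X$ is $Y=\{y\in X\mid{\downarrow}y\text{ clopen}\}$. A Scott upset is a closed upset $F$ with $\min F\subseteq Y$; ${\sf ClopSUp}(X)$ is the set of clopen Scott upsets; $\mathrm{core}\,U=\bigcup\{V\in{\sf ClopSUp}(X)\mid V\subseteq U\}$ for $U\in{\sf ClopUp}(X)$. $X$ is an algebraic L-space if $\mathrm{core}\,U$ is dense in $U$ for each $U\in{\sf ClopUp}(X)$. An L-morphism $f:X_1\to X_2$ is coherent if $f^{-1}(\mathrm{core}\,U)\subseteq\mathrm{core}\,f^{-1}(U)$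 for all $U\in{\sf ClopUp}(X_2)$. *)

theory Defs
  imports "HOL-Analysis.Analysis"
begin

definition poset_on :: "'a set \<Rightarrow> ('a \<Rightarrow> 'a \<Rightarrow> bool) \<Rightarrow> bool" where
  "poset_on A le \<longleftrightarrow> (\<forall>x\<in>A. le x x)
     \<and> (\<forall>x\<in>A. \<forall>y\<in>A. le x y \<and> le y x \<longrightarrow> x = y)
     \<and> (\<forall>x\<in>A. \<forall>y\<in>A. \<forall>z\<in>A. le x y \<and> le y z \<longrightarrow> le x z)"

definition is_lub :: "'a set \<Rightarrow> ('a \<Rightarrow> 'a \<Rightarrow> bool) \<Rightarrow> 'a set \<Rightarrow> 'a \<Rightarrow> bool" where
  "is_lub A le S x \<longleftrightarrow> x \<in> A \<and> (\<forall>s\<in>S. le s x) \<and> (\<forall>y\<in>A. (\<forall>s\<in>S. le s y) \<longrightarrow> le x y)"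

definition is_glb :: "'a set \<Rightarrow> ('a \<Rightarrow> 'a \<Rightarrow> bool) \<Rightarrow> 'a set \<Rightarrow> 'a \<Rightarrow> bool" where
  "is_glb A le S x \<longleftrightarrow> x \<in> A \<and> (\<forall>s\<in>S. le x s) \<and> (\<forall>y\<in>A. (\<forall>s\<in>S. le y s) \<longrightarrow> le y x)"

definition fjoin :: "'a set \<Rightarrow> ('a \<Rightarrow> 'a \<Rightarrow> bool) \<Rightarrow> 'a set \<Rightarrow> 'a" where
  "fjoin A le S = (THE x. is_lub A le S x)"

definition fmeet :: "'a set \<Rightarrow> ('a \<Rightarrow> 'a \<Rightarrow> bool) \<Rightarrow> 'a \<Rightarrow> 'a \<Rightarrow> 'a" where
  "fmeet A le a b = (THE x. is_glb A le {a, b} x)"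

definition ftop :: "'a set \<Rightarrow> ('a \<Rightarrow> 'a \<Rightarrow> bool) \<Rightarrow> 'a" where
  "ftop A le = fjoin A le A"

definition frame :: "'a set \<Rightarrow> ('a \<Rightarrow> 'a \<Rightarrow> bool) \<Rightarrow> bool" where
  "frame A le \<longleftrightarrow> poset_on A le
     \<and> (\<forall>S. S \<subseteq> A \<longrightarrow> (\<exists>x. is_lub A le S x))
     \<and> (\<forall>a\<in>A. \<forall>S. S \<subseteq> A \<longrightarrow>
          fmeet A le a (fjoin A le S) = fjoin A le ((\<lambda>s. fmeet A le a s) ` S))"

definition frame_hom :: "'a set \<Rightarrow> ('a \<Rightarrow> 'a \<Rightarrow> bool) \<Rightarrow> 'b set \<Rightarrow> ('b \<Rightarrow> 'b \<Rightarrow> bool)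
    \<Rightarrow> ('a \<Rightarrow> 'b) \<Rightarrow> bool" where
  "frame_hom A1 le1 A2 le2 h \<longleftrightarrow> (\<forall>x\<in>A1. h x \<in> A2)
     \<and> h (ftop A1 le1) = ftop A2 le2
     \<and> (\<forall>a\<in>A1. \<forall>b\<in>A1. h (fmeet A1 le1 a b) = fmeet A2 le2 (h a) (h b))
     \<and> (\<forall>S. S \<subseteq> A1 \<longrightarrow> h (fjoin A1 le1 S) = fjoin A2 le2 (h ` S))"

definition way_below :: "'a set \<Rightarrow> ('a \<Rightarrow> 'a \<Rightarrow> bool) \<Rightarrow> 'a \<Rightarrow> 'a \<Rightarrow> bool" where
  "way_below A le a b \<longleftrightarrow> (\<forall>S. S \<subseteq> A \<longrightarrow> le b (fjoin A le S) \<longrightarrow>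
       (\<exists>T. T \<subseteq> S \<and> finite T \<and> le a (fjoin A le T)))"

definition compact_elems :: "'a set \<Rightarrow> ('a \<Rightarrow> 'a \<Rightarrow> bool) \<Rightarrow> 'a set" where
  "compact_elems A le = {a \<in> A. way_below A le a a}"

definition algebraic_frame :: "'a set \<Rightarrow> ('a \<Rightarrow> 'a \<Rightarrow> bool) \<Rightarrow> bool" where
  "algebraic_frame A le \<longleftrightarrow> frame A le
     \<and> (\<forall>a\<in>A. a = fjoin A le {b \<in> compact_elems A le. le b a})"

definition coherent_frame_hom :: "'a set \<Rightarrow> ('a \<Rightarrow> 'a \<Rightarrow> bool) \<Rightarrow> 'b set \<Rightarrow> ('b \<Rightarrow> 'b \<Rightarrow> bool)
    \<Rightarrow> ('a \<Rightarrow> 'b) \<Rightarrow> bool" where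
  "coherent_frame_hom A1 le1 A2 le2 h \<longleftrightarrow> frame_hom A1 le1 A2 le2 h
     \<and> (\<forall>a \<in> compact_elems A1 le1. h a \<in> compact_elems A2 le2)"

definition alg_frame_iso :: "'a set \<Rightarrow> ('a \<Rightarrow> 'a \<Rightarrow> bool) \<Rightarrow> 'b set \<Rightarrow> ('b \<Rightarrow> 'b \<Rightarrow> bool) \<Rightarrow> bool" where
  "alg_frame_iso A1 le1 A2 le2 \<longleftrightarrow> (\<exists>h g. coherent_frame_hom A1 le1 A2 le2 h
     \<and> coherent_frame_hom A2 le2 A1 le1 g
     \<and> (\<forall>x\<in>A1. g (h x) = x) \<and> (\<forall>y\<in>A2. h (g y) = y))"

definition clopenin :: "'a topology \<Rightarrow> 'a set \<Rightarrow> bool" where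
  "clopenin T U \<longleftrightarrow> closedin T U \<and> openin T U"

definition upset :: "'a topology \<Rightarrow> ('a \<Rightarrow> 'a \<Rightarrow> bool) \<Rightarrow> 'a set \<Rightarrow> bool" where
  "upset T le U \<longleftrightarrow> U \<subseteq> topspace T \<and> (\<forall>x\<in>U. \<forall>y\<in>topspace T. le x y \<longrightarrow> y \<in> U)"

definition downclosure :: "'a topology \<Rightarrow> ('a \<Rightarrow> 'a \<Rightarrow> bool) \<Rightarrow> 'a set \<Rightarrow> 'a set" where
  "downclosure T le S = {y \<in> topspace T. \<exists>x\<in>S. le y x}"

definition stone_space :: "'a topology \<Rightarrow> bool" where
  "stone_space T \<longleftrightarrow> compact_space T \<and> Hausdorff_space T
     \<and> (\<forall>U. openin T U \<longrightarrow> (\<forall>x\<in>U. \<exists>C. clopenin T C \<and> x \<in> C \<and> C \<subseteq> U))"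

definition priestley_space :: "'a topology \<Rightarrow> ('a \<Rightarrow> 'a \<Rightarrow> bool) \<Rightarrow> bool" where
  "priestley_space T le \<longleftrightarrow> stone_space T \<and> poset_on (topspace T) le
     \<and> (\<forall>x\<in>topspace T. \<forall>y\<in>topspace T. \<not> le x y \<longrightarrow>
          (\<exists>U. clopenin T U \<and> upset T le U \<and> x \<in> U \<and> y \<notin> U))"

definition ClopUp :: "'a topology \<Rightarrow> ('a \<Rightarrow> 'a \<Rightarrow> bool) \<Rightarrow> 'a set set" where
  "ClopUp T le = {U. clopenin T U \<and> upset T le U}"

definition L_space :: "'a topology \<Rightarrow> ('a \<Rightarrow> 'a \<Rightarrow> bool) \<Rightarrow> bool" where
  "L_space T le \<longleftrightarrow> priestley_space T le
     \<and> (\<forall>U. clopenin T U \<longrightarrow> clopenin T (downclosure T le U))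
     \<and> (\<forall>U. openin T U \<and> upset T le U \<longrightarrow> openin T (T closure_of U))"

definition L_morphism :: "'a topology \<Rightarrow> ('a \<Rightarrow> 'a \<Rightarrow> bool) \<Rightarrow> 'b topology \<Rightarrow> ('b \<Rightarrow> 'b \<Rightarrow> bool)
    \<Rightarrow> ('a \<Rightarrow> 'b) \<Rightarrow> bool" where
  "L_morphism T1 le1 T2 le2 f \<longleftrightarrow> continuous_map T1 T2 f
     \<and> (\<forall>x\<in>topspace T1. \<forall>y\<in>topspace T1. le1 x y \<longrightarrow> le2 (f x) (f y))
     \<and> (\<forall>U. openin T2 U \<and> upset T2 le2 U \<longrightarrow>
          {x \<in> topspace T1. f x \<in> T2 closure_of U} = T1 closure_of {x \<in> topspace T1. f x \<in> U})"

definition spatial_part :: "'a topology \<Rightarrow> ('a \<Rightarrow> 'a \<Rightarrow> bool) \<Rightarrow> 'a set" where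
  "spatial_part T le = {y \<in> topspace T. clopenin T (downclosure T le {y})}"

definition minimals :: "('a \<Rightarrow> 'a \<Rightarrow> bool) \<Rightarrow> 'a set \<Rightarrow> 'a set" where
  "minimals le F = {x \<in> F. \<forall>y\<in>F. le y x \<longrightarrow> y = x}"

definition scott_upset :: "'a topology \<Rightarrow> ('a \<Rightarrow> 'a \<Rightarrow> bool) \<Rightarrow> 'a set \<Rightarrow> bool" where
  "scott_upset T le F \<longleftrightarrow> closedin T F \<and> upset T le F \<and> minimals le F \<subseteq> spatial_part T le"

definition ClopSUp :: "'a topology \<Rightarrow> ('a \<Rightarrow> 'a \<Rightarrow> bool) \<Rightarrow> 'a set set" where
  "ClopSUp T le = {V. clopenin T V \<and> scott_upset T le V}"

definition core :: "'a topology \<Rightarrow> ('a \<Rightarrow> 'a \<Rightarrow> bool) \<Rightarrow> 'a set \<Rightarrow> 'a set" where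
  "core T le U = \<Union> {V \<in> ClopSUp T le. V \<subseteq> U}"

text \<open>core U dense in U (both inside X; core U is contained in U and U is closed).\<close>
definition algebraic_L_space :: "'a topology \<Rightarrow> ('a \<Rightarrow> 'a \<Rightarrow> bool) \<Rightarrow> bool" where
  "algebraic_L_space T le \<longleftrightarrow> L_space T le
     \<and> (\<forall>U \<in> ClopUp T le. U \<subseteq> T closure_of (core T le U))"

definition coherent_L_morphism :: "'a topology \<Rightarrow> ('a \<Rightarrow> 'a \<Rightarrow> bool) \<Rightarrow> 'b topology \<Rightarrow> ('b \<Rightarrow> 'b \<Rightarrow> bool)
    \<Rightarrow> ('a \<Rightarrow> 'b) \<Rightarrow> bool" where
  "coherent_L_morphism T1 le1 T2 le2 f \<longleftrightarrow> L_morphism T1 le1 T2 le2 f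
     \<and> (\<forall>U \<in> ClopUp T2 le2. {x \<in> topspace T1. f x \<in> core T2 le2 U}
            \<subseteq> core T1 le1 {x \<in> topspace T1. f x \<in> U})"

end

theory Submission
  imports Defs
begin


lemma lub_unique: "poset_on A le \<Longrightarrow> is_lub A le S x \<Longrightarrow> is_lub A le S y \<Longrightarrow> x = y"
  unfolding poset_on_def is_lub_def by blast

lemma fjoin_eq: "poset_on A le \<Longrightarrow> is_lub A le S x \<Longrightarrow> fjoin A le S = x"
  unfolding fjoin_def by (blast intro: the_equality lub_unique)

lemma glb_unique: "poset_on A le \<Longrightarrow> is_glb A le S x \<Longrightarrow> is_glb A le S y \<Longrightarrow> x = y"
  unfolding poset_on_def is_glb_def by blast

lemma fmeet_eq: "poset_on A le \<Longrightarrow> is_glb A le {a,b} x \<Longrightarrow> fmeet A le a b = x"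
  unfolding fmeet_def by (blast intro: the_equality glb_unique)

locale frm =
  fixes A :: "'a set" and le :: "'a \<Rightarrow> 'a \<Rightarrow> bool" (infix "\<sqsubseteq>" 50)
  assumes fr: "frame A le"
begin

lemma po: "poset_on A le" using fr unfolding frame_def by blast
lemma rfl: "x \<in> A \<Longrightarrow> x \<sqsubseteq> x" using po unfolding poset_on_def by blast
lemma asym: "x \<in> A \<Longrightarrow> y \<in> A \<Longrightarrow> x \<sqsubseteq> y \<Longrightarrow> y \<sqsubseteq> x \<Longrightarrow> x = y" using po unfolding poset_on_def by blast
lemma trns: "x \<in> A \<Longrightarrow> y \<in> A \<Longrightarrow> z \<in> A \<Longrightarrow> x \<sqsubseteq> y \<Longrightarrow> y \<sqsubseteq> z \<Longrightarrow> x \<sqsubseteq> z" using po unfolding poset_on_def by blast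

abbreviation "J \<equiv> fjoin A le"
abbreviation "M \<equiv> fmeet A le"

lemma J_lub: "S \<subseteq> A \<Longrightarrow> is_lub A le S (J S)"
proof -
  assume "S \<subseteq> A"
  then obtain x where "is_lub A le S x" using fr unfolding frame_def by blast
  then show ?thesis using fjoin_eq[OF po] by simp
qed

lemma J_in: "S \<subseteq> A \<Longrightarrow> J S \<in> A" using J_lub unfolding is_lub_def by blast
lemma J_ub: "S \<subseteq> A \<Longrightarrow> s \<in> S \<Longrightarrow> s \<sqsubseteq> J S" using J_lub unfolding is_lub_def by blast
lemma J_least: "S \<subseteq> A \<Longrightarrow> y \<in> A \<Longrightarrow> (\<And>s. s \<in> S \<Longrightarrow> s \<sqsubseteq> y) \<Longrightarrow> J S \<sqsubseteq> y"
  using J_lub unfolding is_lub_def by blast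

lemma J_eq: "S \<subseteq> A \<Longrightarrow> x \<in> A \<Longrightarrow> (\<And>s. s \<in> S \<Longrightarrow> s \<sqsubseteq> x) \<Longrightarrow> (\<And>y. y \<in> A \<Longrightarrow> (\<And>s. s \<in> S \<Longrightarrow> s \<sqsubseteq> y) \<Longrightarrow> x \<sqsubseteq> y) \<Longrightarrow> J S = x"
  by (rule fjoin_eq[OF po]) (auto simp: is_lub_def)

lemma J_mono: "S \<subseteq> T \<Longrightarrow> T \<subseteq> A \<Longrightarrow> J S \<sqsubseteq> J T"
  by (rule J_least) (auto intro: J_in J_ub)

lemma glb_ex: "a \<in> A \<Longrightarrow> b \<in> A \<Longrightarrow> is_glb A le {a,b} (J {c\<in>A. c \<sqsubseteq> a \<and> c \<sqsubseteq> b})"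
  unfolding is_glb_def
  by (auto intro!: J_in J_least J_ub)

lemma M_glb: "a \<in> A \<Longrightarrow> b \<in> A \<Longrightarrow> is_glb A le {a,b} (M a b)"
  using glb_ex fmeet_eq[OF po] by metis

lemma M_in: "a \<in> A \<Longrightarrow> b \<in> A \<Longrightarrow> M a b \<in> A" using M_glb unfolding is_glb_def by blast
lemma M_le1: "a \<in> A \<Longrightarrow> b \<in> A \<Longrightarrow> M a b \<sqsubseteq> a" using M_glb unfolding is_glb_def by blast
lemma M_le2: "a \<in> A \<Longrightarrow> b \<in> A \<Longrightarrow> M a b \<sqsubseteq> b" using M_glb unfolding is_glb_def by blast
lemma M_greatest: "a \<in> A \<Longrightarrow> b \<in> A \<Longrightarrow> c \<in> A \<Longrightarrow> c \<sqsubseteq> a \<Longrightarrow> c \<sqsubseteq> b \<Longrightarrow> c \<sqsubseteq> M a b"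
  using M_glb unfolding is_glb_def by blast
lemma M_comm: "M a b = M b a" unfolding fmeet_def by (simp add: insert_commute)

lemma le_iff_M: "a \<in> A \<Longrightarrow> b \<in> A \<Longrightarrow> a \<sqsubseteq> b \<longleftrightarrow> M a b = a"
  by (metis M_greatest M_in M_le1 M_le2 asym rfl)

lemma M_mono: "a \<in> A \<Longrightarrow> b \<in> A \<Longrightarrow> c \<in> A \<Longrightarrow> d \<in> A \<Longrightarrow> a \<sqsubseteq> c \<Longrightarrow> b \<sqsubseteq> d \<Longrightarrow> M a b \<sqsubseteq> M c d"
  by (meson M_greatest M_in M_le1 M_le2 trns)

lemma dist: "a \<in> A \<Longrightarrow> S \<subseteq> A \<Longrightarrow> M a (J S) = J ((\<lambda>s. M a s) ` S)"
  using fr unfolding frame_def by blast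

definition "tp = J A"
definition "bt = J {}"
lemma tp_in: "tp \<in> A" unfolding tp_def by (simp add: J_in)
lemma tp_top: "x \<in> A \<Longrightarrow> x \<sqsubseteq> tp" unfolding tp_def by (simp add: J_ub)
lemma bt_in: "bt \<in> A" unfolding bt_def by (simp add: J_in)
lemma bt_bot: "x \<in> A \<Longrightarrow> bt \<sqsubseteq> x" unfolding bt_def by (rule J_least) auto

definition "jn a b = J {a,b}"
lemma jn_in: "a \<in> A \<Longrightarrow> b \<in> A \<Longrightarrow> jn a b \<in> A" unfolding jn_def by (simp add: J_in)
lemma jn_ub1: "a \<in> A \<Longrightarrow> b \<in> A \<Longrightarrow> a \<sqsubseteq> jn a b" unfolding jn_def by (simp add: J_ub)
lemma jn_ub2: "a \<in> A \<Longrightarrow> b \<in> A \<Longrightarrow> b \<sqsubseteq> jn a b" unfolding jn_def by (simp add: J_ub)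
lemma jn_least: "a \<in> A \<Longrightarrow> b \<in> A \<Longrightarrow> c \<in> A \<Longrightarrow> a \<sqsubseteq> c \<Longrightarrow> b \<sqsubseteq> c \<Longrightarrow> jn a b \<sqsubseteq> c"
  unfolding jn_def by (rule J_least) auto

lemma dist2: "a \<in> A \<Longrightarrow> b \<in> A \<Longrightarrow> c \<in> A \<Longrightarrow> M a (jn b c) = jn (M a b) (M a c)"
  unfolding jn_def using dist[of a "{b,c}"] by simp

lemma J_insert: "t \<in> A \<Longrightarrow> T \<subseteq> A \<Longrightarrow> J (insert t T) = jn t (J T)"
proof (rule J_eq)
  assume t: "t \<in> A" and T: "T \<subseteq> A"
  show "insert t T \<subseteq> A" "jn t (J T) \<in> A" using t T by (auto intro: jn_in J_in)
  show "s \<sqsubseteq> jn t (J T)" if "s \<in> insert t T" for s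
  proof (cases "s = t")
    case True then show ?thesis using t T by (simp add: J_in jn_ub1)
  next
    case False then have "s \<in> T" using that by blast
    then show ?thesis using t T by (meson J_in J_ub jn_in jn_ub2 trns subsetD)
  qed
  show "jn t (J T) \<sqsubseteq> y" if "y \<in> A" "\<And>s. s \<in> insert t T \<Longrightarrow> s \<sqsubseteq> y" for y
    using that t T by (intro jn_least J_least J_in) auto
qed

definition "Mt T = J {x\<in>A. \<forall>t\<in>T. x \<sqsubseteq> t}"
lemma Mt_in: "Mt T \<in> A" unfolding Mt_def by (rule J_in) auto
lemma Mt_lb: "T \<subseteq> A \<Longrightarrow> t \<in> T \<Longrightarrow> Mt T \<sqsubseteq> t"
  unfolding Mt_def by (rule J_least) auto
lemma Mt_greatest: "T \<subseteq> A \<Longrightarrow> x \<in> A \<Longrightarrow> (\<And>t. t \<in> T \<Longrightarrow> x \<sqsubseteq> t) \<Longrightarrow> x \<sqsubseteq> Mt T"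
  unfolding Mt_def by (rule J_ub) auto
lemma Mt_anti: "T \<subseteq> T' \<Longrightarrow> T' \<subseteq> A \<Longrightarrow> Mt T' \<sqsubseteq> Mt T"
  by (meson Mt_greatest Mt_in Mt_lb dual_order.trans subsetD)

definition "imp a b = J {c\<in>A. M c a \<sqsubseteq> b}"
lemma imp_in: "imp a b \<in> A" unfolding imp_def by (rule J_in) auto
lemma imp_ge: "a \<in> A \<Longrightarrow> b \<in> A \<Longrightarrow> c \<in> A \<Longrightarrow> M c a \<sqsubseteq> b \<Longrightarrow> c \<sqsubseteq> imp a b"
  unfolding imp_def by (rule J_ub) auto
lemma imp_mp: "a \<in> A \<Longrightarrow> b \<in> A \<Longrightarrow> M (imp a b) a \<sqsubseteq> b"
proof -
  assume a: "a \<in> A" and b: "b \<in> A"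
  let ?S = "{c\<in>A. M c a \<sqsubseteq> b}"
  have "M (imp a b) a = M a (J ?S)" unfolding imp_def by (simp add: M_comm)
  also have "\<dots> = J ((\<lambda>s. M a s) ` ?S)" using a by (intro dist) auto
  also have "\<dots> \<sqsubseteq> b" using a b by (intro J_least) (auto simp: M_comm intro: M_in)
  finally show ?thesis .
qed

definition filt :: "'a set \<Rightarrow> bool" where
  "filt F \<longleftrightarrow> F \<subseteq> A \<and> F \<noteq> {} \<and> (\<forall>x\<in>F. \<forall>y\<in>A. x \<sqsubseteq> y \<longrightarrow> y \<in> F) \<and> (\<forall>x\<in>F. \<forall>y\<in>F. M x y \<in> F)"
definition idl :: "'a set \<Rightarrow> bool" where
  "idl I \<longleftrightarrow> I \<subseteq> A \<and> I \<noteq> {} \<and> (\<forall>x\<in>I. \<forall>y\<in>A. y \<sqsubseteq> x \<longrightarrow> y \<in> I) \<and> (\<forall>x\<in>I. \<forall>y\<in>I. jn x y \<in> I)"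
definition pf :: "'a set \<Rightarrow> bool" where
  "pf P \<longleftrightarrow> filt P \<and> bt \<notin> P \<and> (\<forall>x\<in>A. \<forall>y\<in>A. jn x y \<in> P \<longrightarrow> x \<in> P \<or> y \<in> P)"

lemma pft:
  assumes G: "filt G" and I: "idl I" and GI: "G \<inter> I = {}"
  shows "\<exists>P. pf P \<and> G \<subseteq> P \<and> P \<inter> I = {}"
proof -
  define FF where "FF = {F. filt F \<and> G \<subseteq> F \<and> F \<inter> I = {}}"
  have "\<exists>U\<in>FF. \<forall>X\<in>C. X \<subseteq> U" if C: "C \<in> chains FF" for C
  proof (cases "C = {}")
    case True then show ?thesis using G GI unfolding FF_def by auto
  next
    case False
    have CF: "C \<subseteq> FF" and ch: "\<forall>X\<in>C. \<forall>Y\<in>C. X \<subseteq> Y \<or> Y \<subseteq> X"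
      using C unfolding chains_def chain_subset_def by auto
    have "filt (\<Union>C)" unfolding filt_def
    proof (intro conjI ballI impI)
      show "\<Union>C \<subseteq> A" using CF unfolding FF_def filt_def by blast
      show "\<Union>C \<noteq> {}" using CF False unfolding FF_def filt_def by blast
      show "y \<in> \<Union>C" if "x \<in> \<Union>C" "y \<in> A" "x \<sqsubseteq> y" for x y
        using that CF unfolding FF_def filt_def by blast
      show "M x y \<in> \<Union>C" if xy: "x \<in> \<Union>C" "y \<in> \<Union>C" for x y
      proof -
        obtain X Y where XY: "X \<in> C" "Y \<in> C" "x \<in> X" "y \<in> Y" using xy by blast
        have fX: "filt X" "filt Y" using XY CF unfolding FF_def by auto
        show ?thesis
        proof (cases "X \<subseteq> Y")
          case True then have "M x y \<in> Y" using fX XY unfolding filt_def by blast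
          then show ?thesis using XY by blast
        next
          case False then have "Y \<subseteq> X" using ch XY by blast
          then have "M x y \<in> X" using fX XY unfolding filt_def by blast
          then show ?thesis using XY by blast
        qed
      qed
    qed
    then have "\<Union>C \<in> FF" using CF False unfolding FF_def by blast
    then show ?thesis by blast
  qed
  then have "\<exists>M\<in>FF. \<forall>X\<in>FF. M \<subseteq> X \<longrightarrow> X = M" by (intro Zorn_Lemma2) blast
  then obtain P where P: "P \<in> FF" and mx: "\<And>X. X \<in> FF \<Longrightarrow> P \<subseteq> X \<Longrightarrow> X = P"
    by blast
  have fP: "filt P" and GP: "G \<subseteq> P" and PI: "P \<inter> I = {}" using P unfolding FF_def by auto
  have PA: "P \<subseteq> A" using fP unfolding filt_def by blast
  have btI: "bt \<in> I" using I bt_bot bt_in unfolding idl_def by blast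
  have prime: "x \<in> P \<or> y \<in> P" if x: "x \<in> A" and y: "y \<in> A" and xy: "jn x y \<in> P" for x y
  proof (rule ccontr)
    assume nxy: "\<not> (x \<in> P \<or> y \<in> P)"
    have ext: "\<exists>p\<in>P. M p z \<in> I" if z: "z \<in> A" "z \<notin> P" for z
    proof (rule ccontr)
      assume nI: "\<not> (\<exists>p\<in>P. M p z \<in> I)"
      define Fz where "Fz = {w\<in>A. \<exists>p\<in>P. M p z \<sqsubseteq> w}"
      have "filt Fz" unfolding filt_def
      proof (intro conjI ballI impI)
        show "Fz \<subseteq> A" unfolding Fz_def by blast
        obtain p where "p \<in> P" using fP unfolding filt_def by blast
        then have "M p z \<in> Fz" unfolding Fz_def using PA z by (auto intro: M_in rfl)
        then show "Fz \<noteq> {}" by blast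
        show "w' \<in> Fz" if "w \<in> Fz" "w' \<in> A" "w \<sqsubseteq> w'" for w w'
          using that PA z unfolding Fz_def by (auto intro: trns M_in)
        show "M w w' \<in> Fz" if ww: "w \<in> Fz" "w' \<in> Fz" for w w'
        proof -
          obtain p p' where p: "p \<in> P" "M p z \<sqsubseteq> w" "w \<in> A" and p': "p' \<in> P" "M p' z \<sqsubseteq> w'" "w' \<in> A"
            using ww unfolding Fz_def by blast
          have pp: "M p p' \<in> P" using fP p p' unfolding filt_def by blast
          have pA: "p \<in> A" "p' \<in> A" using p p' PA by auto
          have "M (M p p') z \<sqsubseteq> M p z" using pA z by (intro M_mono M_in M_le1 rfl) auto
          then have 1: "M (M p p') z \<sqsubseteq> w" using pA z p by (meson M_in trns)
          have "M (M p p') z \<sqsubseteq> M p' z" using pA z by (intro M_mono M_in M_le2 rfl) auto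
          then have 2: "M (M p p') z \<sqsubseteq> w'" using pA z p' by (meson M_in trns)
          have "M (M p p') z \<sqsubseteq> M w w'"
            using 1 2 pA z p p' by (intro M_greatest M_in) auto
          then show ?thesis unfolding Fz_def using pp p p' by (auto intro: M_in)
        qed
      qed
      moreover have "P \<subseteq> Fz" unfolding Fz_def using PA z by (auto intro: M_le1)
      moreover have "Fz \<inter> I = {}"
      proof -
        { fix w assume "w \<in> Fz" "w \<in> I"
          then obtain p where "p \<in> P" "M p z \<sqsubseteq> w" "w \<in> A" unfolding Fz_def by blast
          then have "M p z \<in> I" using I \<open>w \<in> I\<close> PA z M_in unfolding idl_def by blast
          then have False using nI \<open>p \<in> P\<close> by blast }
        then show ?thesis by blast
      qed
      ultimately have "Fz \<in> FF" using GP unfolding FF_def by blast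
      then have "Fz = P" using mx \<open>P \<subseteq> Fz\<close> by blast
      moreover obtain p where "p \<in> P" using fP unfolding filt_def by blast
      then have "z \<in> Fz" unfolding Fz_def using z PA by (auto intro: M_le2)
      ultimately show False using z by blast
    qed
    obtain p where p: "p \<in> P" "M p x \<in> I" using ext x nxy by blast
    obtain q where q: "q \<in> P" "M q y \<in> I" using ext y nxy by blast
    have pq: "M p q \<in> P" using fP p q unfolding filt_def by blast
    have pqA: "p \<in> A" "q \<in> A" using p q PA by auto
    have "M (M p q) (jn x y) \<in> P" using fP pq xy unfolding filt_def by blast
    moreover have "M (M p q) (jn x y) = jn (M (M p q) x) (M (M p q) y)"
      using dist2 pqA x y M_in by blast
    moreover have "M (M p q) x \<in> I"
      using I p(2) pqA x unfolding idl_def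
      by (meson M_in M_le1 M_mono rfl)
    moreover have "M (M p q) y \<in> I"
      using I q(2) pqA y unfolding idl_def
      by (meson M_in M_le2 M_mono rfl)
    ultimately have "jn (M (M p q) x) (M (M p q) y) \<in> P \<inter> I" using I unfolding idl_def by auto
    then show False using PI by blast
  qed
  have "pf P" unfolding pf_def using fP PI btI prime by blast
  then show ?thesis using GP PI by blast
qed

lemma filt_up: "a \<in> A \<Longrightarrow> filt {y\<in>A. a \<sqsubseteq> y}"
  unfolding filt_def by (auto intro: rfl trns M_greatest M_in)
lemma idl_dn: "b \<in> A \<Longrightarrow> idl {y\<in>A. y \<sqsubseteq> b}"
  unfolding idl_def by (auto intro: rfl trns jn_least jn_in)

lemma sep: "a \<in> A \<Longrightarrow> b \<in> A \<Longrightarrow> \<not> a \<sqsubseteq> b \<Longrightarrow> \<exists>P. pf P \<and> a \<in> P \<and> b \<notin> P"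
proof -
  assume a: "a \<in> A" and b: "b \<in> A" and ab: "\<not> a \<sqsubseteq> b"
  have "{y\<in>A. a \<sqsubseteq> y} \<inter> {y\<in>A. y \<sqsubseteq> b} = {}" using ab a b by (auto intro: trns)
  then obtain P where "pf P" "{y\<in>A. a \<sqsubseteq> y} \<subseteq> P" "P \<inter> {y\<in>A. y \<sqsubseteq> b} = {}"
    using pft[OF filt_up[OF a] idl_dn[OF b]] by blast
  then show ?thesis using a b by (auto intro: rfl)
qed

lemma pf_sub: "pf P \<Longrightarrow> P \<subseteq> A" unfolding pf_def filt_def by blast
lemma pf_up: "pf P \<Longrightarrow> x \<in> P \<Longrightarrow> y \<in> A \<Longrightarrow> x \<sqsubseteq> y \<Longrightarrow> y \<in> P" unfolding pf_def filt_def by blast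
lemma pf_tp: "pf P \<Longrightarrow> tp \<in> P"
  by (metis all_not_in_conv filt_def pf_def pf_sub pf_up subsetD tp_in tp_top)
lemma pf_bt: "pf P \<Longrightarrow> bt \<notin> P" unfolding pf_def by blast
lemma pf_M: "pf P \<Longrightarrow> a \<in> A \<Longrightarrow> b \<in> A \<Longrightarrow> M a b \<in> P \<longleftrightarrow> a \<in> P \<and> b \<in> P"
  unfolding pf_def filt_def by (meson M_in M_le1 M_le2)
lemma pf_jn: "pf P \<Longrightarrow> a \<in> A \<Longrightarrow> b \<in> A \<Longrightarrow> jn a b \<in> P \<longleftrightarrow> a \<in> P \<or> b \<in> P"
  by (meson jn_in jn_ub1 jn_ub2 pf_def pf_up)

lemma pf_Mt: assumes "pf P" shows "finite T \<Longrightarrow> T \<subseteq> P \<Longrightarrow> Mt T \<in> P"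
proof (induction T rule: finite_induct)
  case empty
  have "Mt {} = tp" unfolding Mt_def tp_def by simp
  then show ?case using pf_tp assms by simp
next
  case (insert t T)
  have TA: "insert t T \<subseteq> A" using insert pf_sub assms by blast
  have "M t (Mt T) \<in> P" using insert pf_M TA Mt_in assms by auto
  moreover have "M t (Mt T) \<sqsubseteq> Mt (insert t T)"
    using TA by (intro Mt_greatest) (auto intro: M_in Mt_in M_le1 trns[OF _ _ _ M_le2 Mt_lb] simp: Mt_in)
  ultimately show ?case using pf_up insert Mt_in assms by blast
qed

lemma pf_J: assumes "pf P" shows "finite T \<Longrightarrow> T \<subseteq> A \<Longrightarrow> J T \<in> P \<Longrightarrow> \<exists>t\<in>T. t \<in> P"
proof (induction T rule: finite_induct)
  case empty then show ?case using pf_bt bt_def assms by simp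
next
  case (insert t T)
  then have "jn t (J T) \<in> P" using J_insert by simp
  then show ?case using insert pf_jn J_in assms by auto
qed

end


lemma clopen_sub: "clopenin T C \<Longrightarrow> C \<subseteq> topspace T"
  unfolding clopenin_def by (simp add: openin_subset)

locale lsp =
  fixes T :: "'b topology" and le :: "'b \<Rightarrow> 'b \<Rightarrow> bool" (infix "\<preceq>" 50)
  assumes L: "L_space T le"
begin

abbreviation "X \<equiv> topspace T"
abbreviation "CU \<equiv> ClopUp T le"

lemma pri: "priestley_space T le" using L by (simp add: L_space_def)
lemma stn: "stone_space T" using pri by (simp add: priestley_space_def)
lemma pos: "poset_on X le" using pri by (simp add: priestley_space_def)
lemma cpt: "compact_space T" using stn by (simp add: stone_space_def)
lemma zd: "openin T U \<Longrightarrow> x \<in> U \<Longrightarrow> \<exists>C. clopenin T C \<and> x \<in> C \<and> C \<subseteq> U"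
proof -
  assume "openin T U" "x \<in> U"
  moreover have "\<forall>U. openin T U \<longrightarrow> (\<forall>x\<in>U. \<exists>C. clopenin T C \<and> x \<in> C \<and> C \<subseteq> U)"
    using stn by (simp add: stone_space_def)
  ultimately show ?thesis by blast
qed
lemma psep: "x \<in> X \<Longrightarrow> y \<in> X \<Longrightarrow> \<not> x \<preceq> y \<Longrightarrow> \<exists>U\<in>CU. x \<in> U \<and> y \<notin> U"
proof -
  assume "x \<in> X" "y \<in> X" "\<not> x \<preceq> y"
  moreover have "\<forall>x\<in>X. \<forall>y\<in>X. \<not> x \<preceq> y \<longrightarrow> (\<exists>U. clopenin T U \<and> upset T le U \<and> x \<in> U \<and> y \<notin> U)"
    using pri by (simp add: priestley_space_def)
  ultimately show ?thesis unfolding ClopUp_def by blast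
qed
lemma prfl: "x \<in> X \<Longrightarrow> x \<preceq> x" using pos unfolding poset_on_def by blast
lemma pasym: "x \<in> X \<Longrightarrow> y \<in> X \<Longrightarrow> x \<preceq> y \<Longrightarrow> y \<preceq> x \<Longrightarrow> x = y"
  using pos unfolding poset_on_def by blast
lemma ptrans: "x \<in> X \<Longrightarrow> y \<in> X \<Longrightarrow> z \<in> X \<Longrightarrow> x \<preceq> y \<Longrightarrow> y \<preceq> z \<Longrightarrow> x \<preceq> z"
  using pos unfolding poset_on_def by blast
lemma down_clopen: "clopenin T C \<Longrightarrow> clopenin T (downclosure T le C)"
  using L by (simp add: L_space_def)
lemma cl_open: "openin T U \<Longrightarrow> upset T le U \<Longrightarrow> openin T (T closure_of U)"
  using L by (simp add: L_space_def)
lemma cover: assumes "closedin T F" "\<And>U. U \<in> \<U> \<Longrightarrow> openin T U" "F \<subseteq> \<Union>\<U>"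
  shows "\<exists>\<F>. finite \<F> \<and> \<F> \<subseteq> \<U> \<and> F \<subseteq> \<Union>\<F>"
proof -
  have "compactin T F" using closedin_compact_space[OF cpt assms(1)] .
  then have "\<forall>\<U>. (\<forall>U \<in> \<U>. openin T U) \<and> F \<subseteq> \<Union>\<U> \<longrightarrow> (\<exists>\<F>. finite \<F> \<and> \<F> \<subseteq> \<U> \<and> F \<subseteq> \<Union>\<F>)"
    unfolding compactin_def by blast
  then show ?thesis using assms(2,3) by blast
qed

lemma CU_sub: "U \<in> CU \<Longrightarrow> U \<subseteq> X" unfolding ClopUp_def upset_def by blast
lemma CU_open: "U \<in> CU \<Longrightarrow> openin T U" unfolding ClopUp_def clopenin_def by blast
lemma CU_closed: "U \<in> CU \<Longrightarrow> closedin T U" unfolding ClopUp_def clopenin_def by blast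
lemma CU_up: "U \<in> CU \<Longrightarrow> x \<in> U \<Longrightarrow> y \<in> X \<Longrightarrow> x \<preceq> y \<Longrightarrow> y \<in> U"
  unfolding ClopUp_def upset_def by blast
lemma CU_I: "openin T U \<Longrightarrow> closedin T U \<Longrightarrow> U \<subseteq> X \<Longrightarrow> (\<And>x y. x \<in> U \<Longrightarrow> y \<in> X \<Longrightarrow> x \<preceq> y \<Longrightarrow> y \<in> U) \<Longrightarrow> U \<in> CU"
  unfolding ClopUp_def upset_def clopenin_def by blast

lemma cl_upset: assumes U: "upset T le U" shows "upset T le (T closure_of U)"
  unfolding upset_def
proof (intro conjI ballI impI)
  show "T closure_of U \<subseteq> X" by (rule closure_of_subset_topspace)
  fix x y assume x: "x \<in> T closure_of U" and y: "y \<in> X" and xy: "x \<preceq> y"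
  show "y \<in> T closure_of U"
  proof (rule ccontr)
    assume "y \<notin> T closure_of U"
    then obtain W where W: "openin T W" "y \<in> W" "W \<inter> U = {}"
      using y unfolding in_closure_of by blast
    then obtain C where C: "clopenin T C" "y \<in> C" "C \<subseteq> W" using zd by blast
    have D: "clopenin T (downclosure T le C)" using down_clopen C by blast
    have xX: "x \<in> X" using x by (simp add: in_closure_of)
    have xD: "x \<in> downclosure T le C" unfolding downclosure_def using xX C xy by blast
    have "downclosure T le C \<inter> U = {}"
    proof -
      { fix u assume u: "u \<in> U" "u \<in> downclosure T le C"
        then obtain c where c: "c \<in> C" "u \<preceq> c" unfolding downclosure_def by blast
        have "c \<in> X" using c C clopen_sub by blast
        then have "c \<in> U" using U u c unfolding upset_def by blast
        then have False using c C W by blast }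
      then show ?thesis by blast
    qed
    then show False using x xD D unfolding in_closure_of clopenin_def by blast
  qed
qed

lemma CU_join: "S \<subseteq> CU \<Longrightarrow> T closure_of \<Union>S \<in> CU"
proof -
  assume S: "S \<subseteq> CU"
  have o: "openin T (\<Union>S)" using S CU_open by blast
  have u: "upset T le (\<Union>S)" using S unfolding ClopUp_def upset_def by blast
  show ?thesis unfolding ClopUp_def clopenin_def
    using cl_open[OF o u] cl_upset[OF u] by simp
qed

lemma CU_lub: "S \<subseteq> CU \<Longrightarrow> is_lub CU (\<subseteq>) S (T closure_of \<Union>S)"
  unfolding is_lub_def
proof (intro conjI ballI impI)
  assume S: "S \<subseteq> CU"
  show "T closure_of \<Union>S \<in> CU" using CU_join S by blast
  have "\<Union>S \<subseteq> X" using S CU_sub by blast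
  then show "s \<subseteq> T closure_of \<Union>S" if "s \<in> S" for s using that closure_of_subset by blast
  show "T closure_of \<Union>S \<subseteq> y" if "y \<in> CU" "\<forall>s\<in>S. s \<subseteq> y" for y
    using that by (intro closure_of_minimal CU_closed) auto
qed

lemma poCU: "poset_on CU (\<subseteq>)" unfolding poset_on_def by blast

lemma fjoinCU: "S \<subseteq> CU \<Longrightarrow> fjoin CU (\<subseteq>) S = T closure_of \<Union>S"
  using fjoin_eq[OF poCU CU_lub] by blast

lemma Int_CU: "U \<in> CU \<Longrightarrow> V \<in> CU \<Longrightarrow> U \<inter> V \<in> CU"
  unfolding ClopUp_def clopenin_def upset_def by auto
lemma Un_CU: "U \<in> CU \<Longrightarrow> V \<in> CU \<Longrightarrow> U \<union> V \<in> CU"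
  unfolding ClopUp_def clopenin_def upset_def by auto
lemma X_CU: "X \<in> CU" unfolding ClopUp_def clopenin_def upset_def by auto
lemma empty_CU: "{} \<in> CU" unfolding ClopUp_def clopenin_def upset_def by auto

lemma fmeetCU: "U \<in> CU \<Longrightarrow> V \<in> CU \<Longrightarrow> fmeet CU (\<subseteq>) U V = U \<inter> V"
  by (rule fmeet_eq[OF poCU]) (auto simp: is_glb_def Int_CU)

lemma fjoin_fin: assumes "finite S" "S \<subseteq> CU" shows "fjoin CU (\<subseteq>) S = \<Union>S"
proof -
  have "closedin T (\<Union>S)" using assms CU_closed by (intro closedin_Union) auto
  then show ?thesis using fjoinCU[OF assms(2)] closure_of_closedin by simp
qed

lemma ftopCU: "ftop CU (\<subseteq>) = X"
proof -
  have "fjoin CU (\<subseteq>) CU = T closure_of \<Union>CU" by (rule fjoinCU) simp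
  moreover have "\<Union>CU = X" using X_CU CU_sub by blast
  ultimately show ?thesis unfolding ftop_def by simp
qed

lemma frameCU: "frame CU (\<subseteq>)"
  unfolding frame_def
proof (intro conjI allI impI ballI)
  show "poset_on CU (\<subseteq>)" by (rule poCU)
  show "\<exists>x. is_lub CU (\<subseteq>) S x" if "S \<subseteq> CU" for S using CU_lub that by blast
  fix a S assume a: "a \<in> CU" and S: "S \<subseteq> CU"
  have S2: "(\<lambda>s. fmeet CU (\<subseteq>) a s) ` S = (\<lambda>s. a \<inter> s) ` S" using S a fmeetCU by (intro image_cong) auto
  have S3: "(\<lambda>s. a \<inter> s) ` S \<subseteq> CU" using S a Int_CU by auto
  have "fmeet CU (\<subseteq>) a (fjoin CU (\<subseteq>) S) = a \<inter> T closure_of \<Union>S"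
    using fmeetCU fjoinCU CU_join a S by simp
  also have "\<dots> = T closure_of (a \<inter> \<Union>S)"
  proof
    show "a \<inter> T closure_of \<Union>S \<subseteq> T closure_of (a \<inter> \<Union>S)"
      using openin_Int_closure_of_subset CU_open a by blast
    have "T closure_of (a \<inter> \<Union>S) \<subseteq> T closure_of a" by (rule closure_of_mono) blast
    moreover have "T closure_of (a \<inter> \<Union>S) \<subseteq> T closure_of \<Union>S" by (rule closure_of_mono) blast
    ultimately show "T closure_of (a \<inter> \<Union>S) \<subseteq> a \<inter> T closure_of \<Union>S"
      using closure_of_closedin CU_closed a by blast
  qed
  also have "a \<inter> \<Union>S = \<Union>((\<lambda>s. a \<inter> s) ` S)" by blast
  also have "T closure_of \<dots> = fjoin CU (\<subseteq>) ((\<lambda>s. fmeet CU (\<subseteq>) a s) ` S)"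
    using fjoinCU[OF S3] S2 by simp
  finally show "fmeet CU (\<subseteq>) a (fjoin CU (\<subseteq>) S) = fjoin CU (\<subseteq>) ((\<lambda>s. fmeet CU (\<subseteq>) a s) ` S)" .
qed

lemma down_closed: assumes x: "x \<in> X" shows "closedin T (downclosure T le {x})"
  unfolding closedin_def
proof
  show "downclosure T le {x} \<subseteq> X" unfolding downclosure_def by blast
  show "openin T (X - downclosure T le {x})"
  proof (rule openin_subopen[THEN iffD2], rule ballI)
    fix z assume z: "z \<in> X - downclosure T le {x}"
    then have "\<not> z \<preceq> x" unfolding downclosure_def by blast
    then obtain U where U: "U \<in> CU" "z \<in> U" "x \<notin> U" using psep z x by blast
    have "U \<subseteq> X - downclosure T le {x}"
      using U CU_sub[OF U(1)] CU_up[OF U(1) _ x] unfolding downclosure_def by blast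
    then show "\<exists>T'. openin T T' \<and> z \<in> T' \<and> T' \<subseteq> X - downclosure T le {x}"
      using U CU_open by blast
  qed
qed

lemma min_below:
  assumes F: "closedin T F" and y: "y \<in> F"
  shows "\<exists>m\<in>minimals le F. m \<preceq> y"
proof -
  have FX: "F \<subseteq> X" using F closedin_subset by blast
  define up where "up z = {w\<in>X. z \<preceq> w}" for z
  define FF where "FF = up ` {z\<in>F. z \<preceq> y}"
  have upmono: "up z \<subseteq> up z' \<longleftrightarrow> z' \<preceq> z" if "z \<in> X" "z' \<in> X" for z z'
    using that prfl ptrans unfolding up_def by blast
  have "\<exists>U\<in>FF. \<forall>V\<in>C. V \<subseteq> U" if C: "C \<in> chains FF" for C
  proof (cases "C = {}")
    case True
    have "up y \<in> FF" unfolding FF_def using y FX prfl by blast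
    then show ?thesis using True by blast
  next
    case False
    have CF: "C \<subseteq> FF" and ch: "\<forall>V\<in>C. \<forall>W\<in>C. V \<subseteq> W \<or> W \<subseteq> V"
      using C unfolding chains_def chain_subset_def by auto
    define Z where "Z = {z\<in>F. z \<preceq> y \<and> up z \<in> C}"
    have CZ: "C = up ` Z"
    proof
      show "C \<subseteq> up ` Z"
      proof
        fix V assume V: "V \<in> C"
        then have "V \<in> FF" using CF by blast
        then obtain z where z: "z \<in> F" "z \<preceq> y" "V = up z" unfolding FF_def by blast
        then have "z \<in> Z" unfolding Z_def using V by blast
        then show "V \<in> up ` Z" using z by blast
      qed
      show "up ` Z \<subseteq> C" unfolding Z_def by blast
    qed
    have ZX: "Z \<subseteq> X" using FX unfolding Z_def by blast
    define \<U> where "\<U> = (\<lambda>z. F \<inter> downclosure T le {z}) ` Z"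
    have "\<Inter>\<U> \<noteq> {}"
    proof (rule compact_space_fip[THEN iffD1, OF cpt, rule_format], intro conjI allI impI ballI)
      show "closedin T C'" if C': "C' \<in> \<U>" for C'
      proof -
        obtain z where z: "z \<in> Z" "C' = F \<inter> downclosure T le {z}" using C' unfolding \<U>_def by blast
        have "z \<in> X" using z ZX by blast
        then show ?thesis using z F down_closed by (simp add: closedin_Int)
      qed
      fix \<F> assume "finite \<F> \<and> \<F> \<subseteq> \<U>"
      then obtain Z' where Z': "Z' \<subseteq> Z" "finite Z'" "\<F> = (\<lambda>z. F \<inter> downclosure T le {z}) ` Z'"
        unfolding \<U>_def by (meson finite_subset_image)
      show "\<Inter>\<F> \<noteq> {}"
      proof (cases "Z' = {}")
        case True then show ?thesis using Z' by simp
      next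
        case False
        have "\<exists>z0\<in>Z'. \<forall>z\<in>Z'. z0 \<preceq> z" using Z'(2,1) False
        proof (induction Z' rule: finite_induct)
          case empty then show ?case by simp
        next
          case (insert a Z'')
          have aX: "a \<in> X" using insert ZX by blast
          show ?case
          proof (cases "Z'' = {}")
            case True then show ?thesis using aX prfl by auto
          next
            case False
            then obtain z0 where z0: "z0 \<in> Z''" "\<forall>z\<in>Z''. z0 \<preceq> z" using insert by blast
            have z0X: "z0 \<in> X" using z0 insert ZX by blast
            have "up a \<in> C" "up z0 \<in> C" using insert z0 unfolding Z_def by auto
            then have "up a \<subseteq> up z0 \<or> up z0 \<subseteq> up a" using ch by blast
            then show ?thesis
            proof
              assume "up a \<subseteq> up z0"
              then have "z0 \<preceq> a" using upmono[OF aX z0X] by blast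
              then show ?thesis using z0 by blast
            next
              assume "up z0 \<subseteq> up a"
              then have "a \<preceq> z0" using upmono[OF z0X aX] by blast
              have "a \<preceq> z" if zz: "z \<in> Z''" for z
              proof -
                have "z \<in> X" using zz insert ZX by blast
                then show ?thesis using ptrans[OF aX z0X] \<open>a \<preceq> z0\<close> z0 zz by blast
              qed
              then have "\<forall>z\<in>Z''. a \<preceq> z" by blast
              then show ?thesis using aX prfl by blast
            qed
          qed
        qed
        then obtain z0 where z0: "z0 \<in> Z'" "\<forall>z\<in>Z'. z0 \<preceq> z" by blast
        have "z0 \<in> F" "z0 \<in> X" using z0 Z' unfolding Z_def using FX by auto
        then have "z0 \<in> \<Inter>\<F>" using z0 Z'(3) unfolding downclosure_def by auto
        then show ?thesis by blast
      qed
    qed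
    then obtain m where m: "m \<in> \<Inter>\<U>" by blast
    obtain z1 where z1: "z1 \<in> Z" using CZ False by blast
    have mF: "m \<in> F" using m z1 unfolding \<U>_def by blast
    have mz: "\<forall>z\<in>Z. m \<preceq> z" using m unfolding \<U>_def downclosure_def by blast
    have mX: "m \<in> X" using mF FX by blast
    have z1y: "z1 \<preceq> y" "z1 \<in> X" using z1 ZX unfolding Z_def by auto
    have yX: "y \<in> X" using y FX by blast
    have my: "m \<preceq> y" using ptrans[OF mX z1y(2) yX] mz z1 z1y by blast
    have "up m \<in> FF" unfolding FF_def using mF my by blast
    moreover have "\<forall>V\<in>C. V \<subseteq> up m"
    proof
      fix V assume "V \<in> C" then obtain z where z: "z \<in> Z" "V = up z" using CZ by blast
      have "z \<in> X" using z ZX by blast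
      then show "V \<subseteq> up m" using upmono[OF \<open>z \<in> X\<close> mX] mz z by blast
    qed
    ultimately show ?thesis by blast
  qed
  then have "\<exists>M\<in>FF. \<forall>V\<in>FF. M \<subseteq> V \<longrightarrow> V = M" by (intro Zorn_Lemma2) blast
  then obtain M0 where M0: "M0 \<in> FF" and mx0: "\<forall>V\<in>FF. M0 \<subseteq> V \<longrightarrow> V = M0" by blast
  from M0 obtain m0 where m0: "m0 \<in> F" "m0 \<preceq> y" and M0e: "M0 = up m0" unfolding FF_def by blast
  have mx: "\<And>V. V \<in> FF \<Longrightarrow> up m0 \<subseteq> V \<Longrightarrow> V = up m0" using mx0 M0e by blast
  have m0X: "m0 \<in> X" using m0 FX by blast
  have "m0 \<in> minimals le F" unfolding minimals_def
  proof (intro CollectI conjI ballI impI)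
    show "m0 \<in> F" by (rule m0(1))
    fix w assume w: "w \<in> F" "w \<preceq> m0"
    have wX: "w \<in> X" using w FX by blast
    have yX: "y \<in> X" using y FX by blast
    have "w \<preceq> y" using ptrans[OF wX m0X yX w(2) m0(2)] .
    then have "up w \<in> FF" unfolding FF_def using w by blast
    moreover have "up m0 \<subseteq> up w" using upmono[OF m0X wX] w by blast
    ultimately have "up w = up m0" using mx by blast
    then have "m0 \<preceq> w" using upmono[OF wX m0X] by blast
    then show "w = m0" using w pasym wX m0X by blast
  qed
  then show ?thesis using m0 by blast
qed

lemma CSU_CU: "V \<in> ClopSUp T le \<Longrightarrow> V \<in> CU"
  unfolding ClopSUp_def ClopUp_def scott_upset_def by blast

lemma CSU_cover:
  assumes V: "V \<in> ClopSUp T le" and S: "S \<subseteq> CU" and VS: "V \<subseteq> T closure_of \<Union>S"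
  shows "V \<subseteq> \<Union>S"
proof
  fix y assume y: "y \<in> V"
  have Vc: "closedin T V" using V unfolding ClopSUp_def clopenin_def by blast
  obtain m where m: "m \<in> minimals le V" "m \<preceq> y" using min_below[OF Vc y] by blast
  have "m \<in> spatial_part T le" using m V unfolding ClopSUp_def scott_upset_def by blast
  then have D: "clopenin T (downclosure T le {m})" and mX: "m \<in> X" unfolding spatial_part_def by auto
  have mV: "m \<in> V" using m unfolding minimals_def by blast
  have "m \<in> downclosure T le {m}" unfolding downclosure_def using mX prfl by blast
  moreover have "m \<in> T closure_of \<Union>S" using VS mV by blast
  ultimately have "\<exists>w. w \<in> \<Union>S \<and> w \<in> downclosure T le {m}"
    using D unfolding in_closure_of clopenin_def by blast
  then obtain w where w: "w \<in> \<Union>S" "w \<in> downclosure T le {m}" by blast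
  then obtain U where U: "U \<in> S" "w \<in> U" "w \<preceq> m" unfolding downclosure_def by blast
  have "m \<in> U" using U S CU_up mX by blast
  moreover have "y \<in> X" using y CU_sub[OF CSU_CU[OF V]] by blast
  ultimately have "y \<in> U" using CU_up[of U m y] U S m by blast
  then show "y \<in> \<Union>S" using U by blast
qed

lemma CSU_compact: assumes V: "V \<in> ClopSUp T le" shows "V \<in> compact_elems CU (\<subseteq>)"
  unfolding compact_elems_def way_below_def
proof (intro CollectI conjI allI impI)
  show "V \<in> CU" using CSU_CU V by blast
  fix S assume S: "S \<subseteq> CU" and VS: "V \<subseteq> fjoin CU (\<subseteq>) S"
  have "V \<subseteq> \<Union>S" using CSU_cover[OF V S] VS fjoinCU[OF S] by simp
  then obtain F where F: "finite F" "F \<subseteq> S" "V \<subseteq> \<Union>F"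
    using cover[of V S] CU_closed[OF CSU_CU[OF V]] S CU_open by blast
  have "fjoin CU (\<subseteq>) F = \<Union>F" using fjoin_fin F S by blast
  then show "\<exists>T'. T' \<subseteq> S \<and> finite T' \<and> V \<subseteq> fjoin CU (\<subseteq>) T'" using F by (intro exI[of _ F]) simp
qed

lemma CSU_empty: "{} \<in> ClopSUp T le"
  unfolding ClopSUp_def scott_upset_def clopenin_def upset_def minimals_def by simp

lemma CSU_Un: assumes "U \<in> ClopSUp T le" "V \<in> ClopSUp T le" shows "U \<union> V \<in> ClopSUp T le"
proof -
  have "minimals le (U \<union> V) \<subseteq> minimals le U \<union> minimals le V" unfolding minimals_def by blast
  moreover have "closedin T (U \<union> V)" "openin T (U \<union> V)"
    using assms unfolding ClopSUp_def clopenin_def by auto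
  moreover have "upset T le (U \<union> V)"
    using assms unfolding ClopSUp_def scott_upset_def upset_def by blast
  moreover have "minimals le U \<union> minimals le V \<subseteq> spatial_part T le"
    using assms unfolding ClopSUp_def scott_upset_def by blast
  ultimately show ?thesis unfolding ClopSUp_def scott_upset_def clopenin_def by blast
qed

lemma CSU_Union: "finite S \<Longrightarrow> S \<subseteq> ClopSUp T le \<Longrightarrow> \<Union>S \<in> ClopSUp T le"
  by (induction S rule: finite_induct) (auto intro: CSU_empty CSU_Un)

lemma core_sub: "core T le U \<subseteq> U" unfolding core_def by blast

end

locale alsp = lsp +
  assumes alg: "\<forall>U \<in> ClopUp T le. U \<subseteq> T closure_of (core T le U)"
begin

lemma compact_CSU: assumes K: "K \<in> compact_elems CU (\<subseteq>)" shows "K \<in> ClopSUp T le"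
proof -
  have KC: "K \<in> CU" and wb: "way_below CU (\<subseteq>) K K" using K unfolding compact_elems_def by auto
  define S where "S = {V \<in> ClopSUp T le. V \<subseteq> K}"
  have S: "S \<subseteq> CU" unfolding S_def using CSU_CU by blast
  have "core T le K = \<Union>S" unfolding core_def S_def by blast
  moreover have "K \<subseteq> T closure_of (core T le K)" using alg KC by blast
  ultimately have KS: "K \<subseteq> fjoin CU (\<subseteq>) S" using fjoinCU[OF S] by simp
  have "\<forall>S. S \<subseteq> CU \<longrightarrow> K \<subseteq> fjoin CU (\<subseteq>) S \<longrightarrow> (\<exists>T. T \<subseteq> S \<and> finite T \<and> K \<subseteq> fjoin CU (\<subseteq>) T)"
    using wb unfolding way_below_def .
  then have "\<exists>T. T \<subseteq> S \<and> finite T \<and> K \<subseteq> fjoin CU (\<subseteq>) T"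
    using S KS by (auto dest: spec[of _ S])
  then obtain F where F: "F \<subseteq> S" "finite F" "K \<subseteq> fjoin CU (\<subseteq>) F" by blast
  have FC: "F \<subseteq> CU" using F(1) S by (rule subset_trans)
  have "fjoin CU (\<subseteq>) F = \<Union>F" using fjoin_fin[OF F(2) FC] .
  then have "K \<subseteq> \<Union>F" using F(3) by simp
  moreover have "\<Union>F \<subseteq> K" using F(1) unfolding S_def by blast
  ultimately have "K = \<Union>F" by (rule subset_antisym)
  moreover have "F \<subseteq> ClopSUp T le" using F(1) unfolding S_def by blast
  then have "\<Union>F \<in> ClopSUp T le" using CSU_Union F(2) by blast
  ultimately show ?thesis by simp
qed

lemma algframe: "algebraic_frame CU (\<subseteq>)"
  unfolding algebraic_frame_def
proof (intro conjI ballI)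
  show "frame CU (\<subseteq>)" by (rule frameCU)
  fix U assume U: "U \<in> CU"
  define Q where "Q = {b \<in> compact_elems CU (\<subseteq>). b \<subseteq> U}"
  have Q: "Q \<subseteq> CU" unfolding Q_def compact_elems_def by blast
  have "\<Union>Q \<subseteq> U" unfolding Q_def by blast
  then have c1: "T closure_of \<Union>Q \<subseteq> U" using CU_closed[OF U] by (rule closure_of_minimal)
  have "core T le U \<subseteq> \<Union>Q"
  proof
    fix x assume "x \<in> core T le U"
    then obtain V where V: "V \<in> ClopSUp T le" "V \<subseteq> U" "x \<in> V" unfolding core_def by blast
    then have "V \<in> Q" unfolding Q_def using CSU_compact[OF V(1)] by blast
    then show "x \<in> \<Union>Q" using V by blast
  qed
  then have "T closure_of (core T le U) \<subseteq> T closure_of \<Union>Q" by (rule closure_of_mono)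
  moreover have "U \<subseteq> T closure_of (core T le U)" using alg U by blast
  ultimately have "U \<subseteq> T closure_of \<Union>Q" by blast
  with c1 show "U = fjoin CU (\<subseteq>) Q" using fjoinCU[OF Q] by simp
qed

end



context lsp begin

lemma compl_closed: "U \<in> CU \<Longrightarrow> openin T (X - U)"
  using CU_closed unfolding closedin_def by blast
lemma compl_open: "U \<in> CU \<Longrightarrow> closedin T (X - U)"
  using CU_open CU_sub closedin_diff by blast

lemma openup_union:
  assumes U: "openin T U" "upset T le U"
  shows "U = \<Union>{V\<in>CU. V \<subseteq> U}"
proof
  show "\<Union>{V\<in>CU. V \<subseteq> U} \<subseteq> U" by blast
  show "U \<subseteq> \<Union>{V\<in>CU. V \<subseteq> U}"
  proof
    fix y assume y: "y \<in> U"
    have UX: "U \<subseteq> X" using U(2) unfolding upset_def by blast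
    have yX: "y \<in> X" using y UX by blast
    define G where "G = {X - V | V. V \<in> CU \<and> y \<in> V}"
    have cl: "closedin T (X - U)" using U(1) by (simp add: closedin_diff)
    have Gop: "Ob \<in> G \<Longrightarrow> openin T Ob" for Ob unfolding G_def using compl_closed by blast
    have cov: "X - U \<subseteq> \<Union>G"
    proof
      fix z assume z: "z \<in> X - U"
      have "\<not> y \<preceq> z"
      proof
        assume "y \<preceq> z"
        then have "z \<in> U" using U(2) y z unfolding upset_def by blast
        then show False using z by blast
      qed
      then obtain V where V: "V \<in> CU" "y \<in> V" "z \<notin> V" using psep yX z by blast
      then have "X - V \<in> G" unfolding G_def by blast
      then show "z \<in> \<Union>G" using z V by blast
    qed
    have "\<exists>F. finite F \<and> F \<subseteq> G \<and> X - U \<subseteq> \<Union>F" by (rule cover[OF cl Gop cov])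
    then obtain F where F: "finite F" "F \<subseteq> G" "X - U \<subseteq> \<Union>F" by blast
    have "F \<subseteq> G \<Longrightarrow> X - \<Union>F \<in> CU \<and> y \<in> X - \<Union>F" using F(1)
    proof (induction F rule: finite_induct)
      case empty then show ?case using X_CU yX by simp
    next
      case (insert Ob F)
      have ObG: "Ob \<in> G" using insert.prems by blast
      then obtain V where V: "V \<in> CU" "y \<in> V" "Ob = X - V" unfolding G_def by blast
      have VX: "V \<subseteq> X" using CU_sub V(1) .
      have IH: "X - \<Union>F \<in> CU" "y \<in> X - \<Union>F" using insert.IH insert.prems by auto
      have "X - \<Union>(insert Ob F) = (X - Ob) \<inter> (X - \<Union>F)" by blast
      also have "X - Ob = V" using V(3) VX by blast
      finally have eq: "X - \<Union>(insert Ob F) = V \<inter> (X - \<Union>F)" .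
      have "V \<inter> (X - \<Union>F) \<in> CU" using Int_CU V(1) IH(1) .
      moreover have "y \<in> V \<inter> (X - \<Union>F)" using V(2) IH(2) by blast
      ultimately show ?case using eq by simp
    qed
    then have W: "X - \<Union>F \<in> CU \<and> y \<in> X - \<Union>F" using F(2) by blast
    then have W: "X - \<Union>F \<in> CU" "y \<in> X - \<Union>F" by auto
    have "X - \<Union>F \<subseteq> U" using F(3) by blast
    then show "y \<in> \<Union>{V\<in>CU. V \<subseteq> U}" using W by blast
  qed
qed

lemma nbhd:
  assumes W: "openin T W" and y: "y \<in> W"
  shows "\<exists>U\<in>CU. \<exists>V\<in>CU. y \<in> U \<and> y \<notin> V \<and> U - V \<subseteq> W"
proof -
  have yX: "y \<in> X" using W y openin_subset by blast
  define G where "G = {X - U | U. U \<in> CU \<and> y \<in> U} \<union> {V. V \<in> CU \<and> y \<notin> V}"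
  have cl: "closedin T (X - W)" using W by (simp add: closedin_diff)
  have Gop: "Ob \<in> G \<Longrightarrow> openin T Ob" for Ob unfolding G_def using compl_closed CU_open by blast
  have cov: "X - W \<subseteq> \<Union>G"
  proof
    fix z assume z: "z \<in> X - W"
    then have zX: "z \<in> X" and zy: "z \<noteq> y" using y by auto
    show "z \<in> \<Union>G"
    proof (cases "y \<preceq> z")
      case False
      then obtain U where U: "U \<in> CU" "y \<in> U" "z \<notin> U" using psep yX zX by blast
      then have "X - U \<in> G" unfolding G_def by blast
      then show ?thesis using zX U by blast
    next
      case True
      then have "\<not> z \<preceq> y" using pasym yX zX zy by blast
      then obtain V where V: "V \<in> CU" "z \<in> V" "y \<notin> V" using psep yX zX by blast
      then have "V \<in> G" unfolding G_def by blast
      then show ?thesis using V by blast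
    qed
  qed
  have "\<exists>F. finite F \<and> F \<subseteq> G \<and> X - W \<subseteq> \<Union>F" by (rule cover[OF cl Gop cov])
  then obtain F where F: "finite F" "F \<subseteq> G" "X - W \<subseteq> \<Union>F" by blast
  have "F \<subseteq> G \<Longrightarrow> \<exists>U\<in>CU. \<exists>V\<in>CU. y \<in> U \<and> y \<notin> V \<and> X - \<Union>F = U - V" using F(1)
  proof (induction F rule: finite_induct)
    case empty then show ?case using X_CU empty_CU yX by (intro bexI[of _ X] bexI[of _ "{}"]) auto
  next
    case (insert Ob F)
    have "\<exists>U\<in>CU. \<exists>V\<in>CU. y \<in> U \<and> y \<notin> V \<and> X - \<Union>F = U - V"
      using insert.IH insert.prems by blast
    then obtain U V where UV: "U \<in> CU" "V \<in> CU" "y \<in> U" "y \<notin> V" "X - \<Union>F = U - V" by blast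
    have Ob: "Ob \<in> G" using insert.prems by blast
    have UX: "U \<subseteq> X" using CU_sub UV(1) .
    have e0: "X - \<Union>(insert Ob F) = (X - Ob) \<inter> (X - \<Union>F)" by blast
    show ?case
    proof (cases "\<exists>U'. U' \<in> CU \<and> y \<in> U' \<and> Ob = X - U'")
      case True
      then obtain U' where U': "U' \<in> CU" "y \<in> U'" "Ob = X - U'" by blast
      have U'X: "U' \<subseteq> X" using CU_sub U'(1) .
      have XO: "X - Ob = U'" using U'(3) U'X by blast
      have "X - \<Union>(insert Ob F) = U' \<inter> (U - V)" unfolding e0 XO UV(5) ..
      also have "\<dots> = (U' \<inter> U) - V" by blast
      finally have "X - \<Union>(insert Ob F) = (U' \<inter> U) - V" .
      moreover have "U' \<inter> U \<in> CU" using Int_CU U'(1) UV(1) .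
      moreover have "y \<in> U' \<inter> U" using U'(2) UV(3) by blast
      ultimately show ?thesis using UV(2,4) by blast
    next
      case False
      then have V': "Ob \<in> CU" "y \<notin> Ob" using Ob unfolding G_def by blast+
      have "X - \<Union>(insert Ob F) = (X - Ob) \<inter> (U - V)" unfolding e0 UV(5) ..
      also have "\<dots> = U - (V \<union> Ob)" using UX by blast
      finally have "X - \<Union>(insert Ob F) = U - (V \<union> Ob)" .
      moreover have "V \<union> Ob \<in> CU" using Un_CU UV(2) V'(1) .
      moreover have "y \<notin> V \<union> Ob" using UV(4) V'(2) by blast
      ultimately show ?thesis using UV(1,3) by blast
    qed
  qed
  then have "\<exists>U\<in>CU. \<exists>V\<in>CU. y \<in> U \<and> y \<notin> V \<and> X - \<Union>F = U - V" using F(2) by blast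
  then obtain U V where UV: "U \<in> CU" "V \<in> CU" "y \<in> U" "y \<notin> V" "X - \<Union>F = U - V" by blast
  have "U - V \<subseteq> W" using UV(5) F(3) by blast
  then show ?thesis using UV by blast
qed

lemma pf_point:
  assumes FC: "F \<subseteq> CU" and XF: "X \<in> F" and eF: "{} \<notin> F"
    and Fint: "\<And>U V. U \<in> F \<Longrightarrow> V \<in> F \<Longrightarrow> U \<inter> V \<in> F"
    and Fpr: "\<And>U V. U \<in> CU \<Longrightarrow> V \<in> CU \<Longrightarrow> U \<union> V \<in> F \<Longrightarrow> U \<in> F \<or> V \<in> F"
    and Fup: "\<And>U V. U \<in> F \<Longrightarrow> V \<in> CU \<Longrightarrow> U \<subseteq> V \<Longrightarrow> V \<in> F"
  shows "\<exists>y\<in>X. \<forall>U\<in>CU. y \<in> U \<longleftrightarrow> U \<in> F"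
proof -
  define \<U> where "\<U> = F \<union> {X - V | V. V \<in> CU \<and> V \<notin> F}"
  have "\<Inter>\<U> \<noteq> {}"
  proof (rule compact_space_fip[THEN iffD1, OF cpt, rule_format], intro conjI allI impI ballI)
    show "closedin T C" if "C \<in> \<U>" for C
      using that FC CU_closed compl_open unfolding \<U>_def by blast
    fix \<F> assume fF: "finite \<F> \<and> \<F> \<subseteq> \<U>"
    define F0 where "F0 = \<F> \<inter> F"
    define V0 where "V0 = {V. V \<in> CU \<and> V \<notin> F \<and> X - V \<in> \<F>}"
    have fF0: "finite F0" using fF unfolding F0_def by blast
    have "V0 \<subseteq> (\<lambda>Ob. X - Ob) ` \<F>"
    proof
      fix V assume "V \<in> V0"
      then have "V \<in> CU" "X - V \<in> \<F>" unfolding V0_def by auto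
      then have "V = X - (X - V)" "X - V \<in> \<F>" using CU_sub by auto
      then show "V \<in> (\<lambda>Ob. X - Ob) ` \<F>" by blast
    qed
    then have fV0: "finite V0" using fF finite_subset by blast
    have i1: "F0 \<subseteq> F \<Longrightarrow> X \<inter> \<Inter>F0 \<in> F" using fF0
    proof (induction F0 rule: finite_induct)
      case empty then show ?case using XF by simp
    next
      case (insert U F0)
      have "X \<inter> \<Inter>(insert U F0) = U \<inter> (X \<inter> \<Inter>F0)" using insert FC CU_sub by blast
      then show ?case using insert Fint by simp
    qed
    have i2: "V0 \<subseteq> CU - F \<Longrightarrow> \<Union>V0 \<in> CU \<and> \<Union>V0 \<notin> F" using fV0
    proof (induction V0 rule: finite_induct)
      case empty then show ?case using empty_CU eF by simp
    next
      case (insert V V0)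
      then show ?case using Un_CU Fpr by auto
    qed
    have A: "X \<inter> \<Inter>F0 \<in> F" using i1 unfolding F0_def by blast
    have B: "\<Union>V0 \<in> CU" "\<Union>V0 \<notin> F" using i2 unfolding V0_def by blast+
    have "\<not> X \<inter> \<Inter>F0 \<subseteq> \<Union>V0"
    proof
      assume "X \<inter> \<Inter>F0 \<subseteq> \<Union>V0"
      then have "\<Union>V0 \<in> F" using Fup A B by blast
      then show False using B by blast
    qed
    then obtain p where p: "p \<in> X" "p \<in> \<Inter>F0" "p \<notin> \<Union>V0" by blast
    have "p \<in> Ob" if Ob: "Ob \<in> \<F>" for Ob
    proof (cases "Ob \<in> F")
      case True then show ?thesis using p Ob unfolding F0_def by blast
    next
      case False
      then obtain V where V: "V \<in> CU" "V \<notin> F" "Ob = X - V" using Ob fF unfolding \<U>_def by blast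
      then have "V \<in> V0" using Ob unfolding V0_def by blast
      then show ?thesis using p V by blast
    qed
    then show "\<Inter>\<F> \<noteq> {}" by blast
  qed
  then obtain y where y: "y \<in> \<Inter>\<U>" by blast
  have yX: "y \<in> X" using y XF unfolding \<U>_def by blast
  have "y \<in> U \<longleftrightarrow> U \<in> F" if U: "U \<in> CU" for U
  proof
    assume "y \<in> U"
    show "U \<in> F"
    proof (rule ccontr)
      assume "U \<notin> F"
      then have "X - U \<in> \<U>" using U unfolding \<U>_def by blast
      then show False using y \<open>y \<in> U\<close> by blast
    qed
  next
    assume "U \<in> F" then show "y \<in> U" using y unfolding \<U>_def by blast
  qed
  then show ?thesis using yX by blast
qed

end

lemma alspI: "algebraic_L_space T le \<Longrightarrow> alsp T le"
  unfolding algebraic_L_space_def alsp_def lsp_def alsp_axioms_def by blast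

lemma part1: "algebraic_L_space T le \<Longrightarrow> algebraic_frame (ClopUp T le) (\<subseteq>)"
proof -
  assume "algebraic_L_space T le"
  then interpret alsp T le by (rule alspI)
  show ?thesis by (rule algframe)
qed



lemma cmap_into: "continuous_map T1 T2 f \<Longrightarrow> x \<in> topspace T1 \<Longrightarrow> f x \<in> topspace T2"
  unfolding continuous_map_def by blast

lemma part2:
  assumes A1: "alsp T1 le1" and A2: "alsp T2 le2" and cf: "coherent_L_morphism T1 le1 T2 le2 f"
  shows "coherent_frame_hom (ClopUp T2 le2) (\<subseteq>) (ClopUp T1 le1) (\<subseteq>) (\<lambda>U. {x \<in> topspace T1. f x \<in> U})"
proof -
  interpret A1: alsp T1 le1 by (rule A1)
  interpret A2: alsp T2 le2 by (rule A2)
  have Lm: "L_morphism T1 le1 T2 le2 f" using cf by (simp add: coherent_L_morphism_def)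
  have cont: "continuous_map T1 T2 f" using Lm by (simp add: L_morphism_def)
  have mono: "\<forall>x\<in>topspace T1. \<forall>y\<in>topspace T1. le1 x y \<longrightarrow> le2 (f x) (f y)" using Lm by (simp add: L_morphism_def)
  have clo: "\<forall>U. openin T2 U \<and> upset T2 le2 U \<longrightarrow>
          {x \<in> topspace T1. f x \<in> T2 closure_of U} = T1 closure_of {x \<in> topspace T1. f x \<in> U}"
    using Lm by (simp add: L_morphism_def)
  have coh: "\<forall>U \<in> ClopUp T2 le2. {x \<in> topspace T1. f x \<in> core T2 le2 U} \<subseteq> core T1 le1 {x \<in> topspace T1. f x \<in> U}"
    using cf by (simp add: coherent_L_morphism_def)
  define p where "p U = {x \<in> topspace T1. f x \<in> U}" for U
  have pCU: "p U \<in> ClopUp T1 le1" if U: "U \<in> ClopUp T2 le2" for U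
  proof (rule A1.CU_I)
    show "openin T1 (p U)" unfolding p_def using openin_continuous_map_preimage[OF cont A2.CU_open[OF U]] .
    show "closedin T1 (p U)" unfolding p_def using closedin_continuous_map_preimage[OF cont A2.CU_closed[OF U]] .
    show "p U \<subseteq> topspace T1" unfolding p_def by blast
    fix x y assume x: "x \<in> p U" and y: "y \<in> topspace T1" and xy: "le1 x y"
    have "f x \<in> U" "x \<in> topspace T1" using x unfolding p_def by auto
    moreover have "le2 (f x) (f y)" using mono xy y \<open>x \<in> topspace T1\<close> by blast
    moreover have "f y \<in> topspace T2" using cmap_into[OF cont y] .
    ultimately have "f y \<in> U" using A2.CU_up[OF U] by blast
    then show "y \<in> p U" unfolding p_def using y by blast
  qed
  have hom: "frame_hom (ClopUp T2 le2) (\<subseteq>) (ClopUp T1 le1) (\<subseteq>) p"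
    unfolding frame_hom_def
  proof (intro conjI ballI allI impI)
    show "p x \<in> ClopUp T1 le1" if "x \<in> ClopUp T2 le2" for x using pCU that .
    have "p (topspace T2) = topspace T1" unfolding p_def using cmap_into[OF cont] by blast
    then show "p (ftop (ClopUp T2 le2) (\<subseteq>)) = ftop (ClopUp T1 le1) (\<subseteq>)"
      using A1.ftopCU A2.ftopCU by simp
    fix a b assume a: "a \<in> ClopUp T2 le2" and b: "b \<in> ClopUp T2 le2"
    have "p (a \<inter> b) = p a \<inter> p b" unfolding p_def by blast
    then show "p (fmeet (ClopUp T2 le2) (\<subseteq>) a b) = fmeet (ClopUp T1 le1) (\<subseteq>) (p a) (p b)"
      using A2.fmeetCU[OF a b] A1.fmeetCU[OF pCU[OF a] pCU[OF b]] by simp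
  next
    fix S assume S: "S \<subseteq> ClopUp T2 le2"
    have pS: "p ` S \<subseteq> ClopUp T1 le1" using S pCU by blast
    have o: "openin T2 (\<Union>S)" using S A2.CU_open by blast
    have u: "upset T2 le2 (\<Union>S)" using S unfolding ClopUp_def upset_def by blast
    have "p (fjoin (ClopUp T2 le2) (\<subseteq>) S) = p (T2 closure_of \<Union>S)" using A2.fjoinCU[OF S] by simp
    also have "\<dots> = T1 closure_of p (\<Union>S)" unfolding p_def using clo o u by blast
    also have "p (\<Union>S) = \<Union>(p ` S)" unfolding p_def by blast
    also have "T1 closure_of \<Union>(p ` S) = fjoin (ClopUp T1 le1) (\<subseteq>) (p ` S)" using A1.fjoinCU[OF pS] by simp
    finally show "p (fjoin (ClopUp T2 le2) (\<subseteq>) S) = fjoin (ClopUp T1 le1) (\<subseteq>) (p ` S)" .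
  qed
  have comp: "p K \<in> compact_elems (ClopUp T1 le1) (\<subseteq>)" if K: "K \<in> compact_elems (ClopUp T2 le2) (\<subseteq>)" for K
  proof -
    have KS: "K \<in> ClopSUp T2 le2" using A2.compact_CSU[OF K] .
    have KC: "K \<in> ClopUp T2 le2" using A2.CSU_CU[OF KS] .
    have "K \<subseteq> core T2 le2 K" unfolding core_def using KS by blast
    then have "p K \<subseteq> p (core T2 le2 K)" unfolding p_def by blast
    also have "\<dots> \<subseteq> core T1 le1 (p K)" unfolding p_def using coh KC by blast
    finally have pK: "p K \<subseteq> \<Union>{W \<in> ClopSUp T1 le1. W \<subseteq> p K}" unfolding core_def .
    have cl: "closedin T1 (p K)" using A1.CU_closed[OF pCU[OF KC]] .
    have op: "openin T1 W" if "W \<in> {W \<in> ClopSUp T1 le1. W \<subseteq> p K}" for W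
      using that A1.CSU_CU A1.CU_open by blast
    have "\<exists>F. finite F \<and> F \<subseteq> {W \<in> ClopSUp T1 le1. W \<subseteq> p K} \<and> p K \<subseteq> \<Union>F"
      by (rule A1.cover[OF cl op pK])
    then obtain F where F: "finite F" "F \<subseteq> {W \<in> ClopSUp T1 le1. W \<subseteq> p K}" "p K \<subseteq> \<Union>F" by blast
    have "\<Union>F \<subseteq> p K" using F(2) by blast
    then have eq: "p K = \<Union>F" using F(3) by (rule subset_antisym[rotated])
    have "F \<subseteq> ClopSUp T1 le1" using F(2) by blast
    then have "\<Union>F \<in> ClopSUp T1 le1" using A1.CSU_Union F(1) by blast
    then have "p K \<in> ClopSUp T1 le1" using eq by simp
    then show ?thesis using A1.CSU_compact by blast
  qed
  have "coherent_frame_hom (ClopUp T2 le2) (\<subseteq>) (ClopUp T1 le1) (\<subseteq>) p"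
    unfolding coherent_frame_hom_def using hom comp by blast
  then show ?thesis unfolding p_def .
qed

lemma part3:
  assumes A1: "alsp T1 le1" and A2: "alsp T2 le2"
    and cf: "coherent_L_morphism T1 le1 T2 le2 f" and cg: "coherent_L_morphism T1 le1 T2 le2 g"
    and eq: "\<forall>U \<in> ClopUp T2 le2. {x \<in> topspace T1. f x \<in> U} = {x \<in> topspace T1. g x \<in> U}"
  shows "\<forall>x \<in> topspace T1. f x = g x"
proof
  interpret A2: alsp T2 le2 by (rule A2)
  fix x assume x: "x \<in> topspace T1"
  have cf': "continuous_map T1 T2 f" using cf by (simp add: coherent_L_morphism_def L_morphism_def)
  have cg': "continuous_map T1 T2 g" using cg by (simp add: coherent_L_morphism_def L_morphism_def)
  have fx: "f x \<in> topspace T2" using cmap_into[OF cf' x] .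
  have gx: "g x \<in> topspace T2" using cmap_into[OF cg' x] .
  have sep: False if ab: "\<not> le2 a b" "a \<in> topspace T2" "b \<in> topspace T2" "{a, b} = {f x, g x}" for a b
  proof -
    obtain U where U: "U \<in> ClopUp T2 le2" "a \<in> U" "b \<notin> U" using A2.psep[OF ab(2,3,1)] by blast
    have "x \<in> {x \<in> topspace T1. f x \<in> U} \<longleftrightarrow> x \<in> {x \<in> topspace T1. g x \<in> U}" using eq U(1) by simp
    then have "f x \<in> U \<longleftrightarrow> g x \<in> U" using x by simp
    then show False using U ab(4) by (auto simp: doubleton_eq_iff)
  qed
  show "f x = g x"
  proof (rule ccontr)
    assume ne: "f x \<noteq> g x"
    show False
    proof (cases "le2 (f x) (g x)")
      case True
      then have "\<not> le2 (g x) (f x)" using A2.pasym fx gx ne by blast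
      then show False using sep[of "g x" "f x"] fx gx by blast
    next
      case False then show False using sep[of "f x" "g x"] fx gx by blast
    qed
  qed
qed



lemma part4:
  assumes A1: "alsp T1 le1" and A2: "alsp T2 le2"
    and ch: "coherent_frame_hom (ClopUp T2 le2) (\<subseteq>) (ClopUp T1 le1) (\<subseteq>) h"
  shows "\<exists>f. coherent_L_morphism T1 le1 T2 le2 f \<and> (\<forall>U \<in> ClopUp T2 le2. h U = {x \<in> topspace T1. f x \<in> U})"
proof -
  interpret A1: alsp T1 le1 by (rule A1)
  interpret A2: alsp T2 le2 by (rule A2)
  let ?C1 = "ClopUp T1 le1" and ?C2 = "ClopUp T2 le2"
  let ?X1 = "topspace T1" and ?X2 = "topspace T2"
  have fh: "frame_hom ?C2 (\<subseteq>) ?C1 (\<subseteq>) h" using ch by (simp add: coherent_frame_hom_def)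
  have hcomp: "\<And>K. K \<in> compact_elems ?C2 (\<subseteq>) \<Longrightarrow> h K \<in> compact_elems ?C1 (\<subseteq>)"
    using ch by (simp add: coherent_frame_hom_def)
  have hCU: "\<And>U. U \<in> ?C2 \<Longrightarrow> h U \<in> ?C1" using fh by (simp add: frame_hom_def)
  have htop0: "h (ftop ?C2 (\<subseteq>)) = ftop ?C1 (\<subseteq>)" using fh by (simp add: frame_hom_def)
  then have htop: "h ?X2 = ?X1" using A1.ftopCU A2.ftopCU by simp
  have hmeet0: "\<forall>a\<in>?C2. \<forall>b\<in>?C2. h (fmeet ?C2 (\<subseteq>) a b) = fmeet ?C1 (\<subseteq>) (h a) (h b)"
    using fh by (simp add: frame_hom_def)
  have hmeet: "h (U \<inter> V) = h U \<inter> h V" if "U \<in> ?C2" "V \<in> ?C2" for U V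
  proof -
    have e: "h (fmeet ?C2 (\<subseteq>) U V) = fmeet ?C1 (\<subseteq>) (h U) (h V)" using hmeet0 that by blast
    show ?thesis using e unfolding A2.fmeetCU[OF that] A1.fmeetCU[OF hCU[OF that(1)] hCU[OF that(2)]] .
  qed
  have hjoin0: "\<forall>S. S \<subseteq> ?C2 \<longrightarrow> h (fjoin ?C2 (\<subseteq>) S) = fjoin ?C1 (\<subseteq>) (h ` S)"
    using fh by (simp add: frame_hom_def)
  have hjoin: "h (T2 closure_of \<Union>S) = T1 closure_of \<Union>(h ` S)" if S: "S \<subseteq> ?C2" for S
  proof -
    have hS: "h ` S \<subseteq> ?C1" using S hCU by blast
    have e: "h (fjoin ?C2 (\<subseteq>) S) = fjoin ?C1 (\<subseteq>) (h ` S)" using hjoin0 S by blast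
    show ?thesis using e unfolding A2.fjoinCU[OF S] A1.fjoinCU[OF hS] .
  qed
  have hemp: "h {} = {}" using hjoin[of "{}"] by simp
  have hun: "h (U \<union> V) = h U \<union> h V" if UV: "U \<in> ?C2" "V \<in> ?C2" for U V
  proof -
    have "T2 closure_of \<Union>{U, V} = U \<union> V"
      using A2.CU_closed[OF UV(1)] A2.CU_closed[OF UV(2)] by (simp add: closure_of_closedin)
    moreover have "T1 closure_of \<Union>(h ` {U, V}) = h U \<union> h V"
      using A1.CU_closed[OF hCU[OF UV(1)]] A1.CU_closed[OF hCU[OF UV(2)]] by (simp add: closure_of_closedin)
    ultimately show ?thesis using hjoin[of "{U,V}"] UV by simp
  qed
  have hmono: "h U \<subseteq> h V" if "U \<in> ?C2" "V \<in> ?C2" "U \<subseteq> V" for U V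
  proof -
    have "U = U \<inter> V" using that by blast
    then have "h U = h U \<inter> h V" using hmeet that by metis
    then show ?thesis by blast
  qed
  have pt: "\<exists>y\<in>?X2. \<forall>U\<in>?C2. y \<in> U \<longleftrightarrow> x \<in> h U" if x: "x \<in> ?X1" for x
  proof -
    define F where "F = {U \<in> ?C2. x \<in> h U}"
    have "\<exists>y\<in>?X2. \<forall>U\<in>?C2. y \<in> U \<longleftrightarrow> U \<in> F"
    proof (rule A2.pf_point)
      show "F \<subseteq> ?C2" unfolding F_def by blast
      show "?X2 \<in> F" unfolding F_def using A2.X_CU htop x by simp
      show "{} \<notin> F" unfolding F_def using hemp by simp
      show "U \<inter> V \<in> F" if "U \<in> F" "V \<in> F" for U V
        using that hmeet A2.Int_CU unfolding F_def by simp
      show "U \<in> F \<or> V \<in> F" if "U \<in> ?C2" "V \<in> ?C2" "U \<union> V \<in> F" for U V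
        using that hun unfolding F_def by simp
      show "V \<in> F" if "U \<in> F" "V \<in> ?C2" "U \<subseteq> V" for U V
        using that hmono unfolding F_def by blast
    qed
    then show ?thesis unfolding F_def by simp
  qed
  define f where "f x = (SOME y. y \<in> ?X2 \<and> (\<forall>U\<in>?C2. y \<in> U \<longleftrightarrow> x \<in> h U))" for x
  have fprop: "f x \<in> ?X2 \<and> (\<forall>U\<in>?C2. f x \<in> U \<longleftrightarrow> x \<in> h U)" if x: "x \<in> ?X1" for x
  proof -
    have "\<exists>y. y \<in> ?X2 \<and> (\<forall>U\<in>?C2. y \<in> U \<longleftrightarrow> x \<in> h U)" using pt[OF x] by blast
    then show ?thesis unfolding f_def by (rule someI_ex)
  qed
  have fX: "f x \<in> ?X2" if "x \<in> ?X1" for x using fprop that by blast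
  have fU: "f x \<in> U \<longleftrightarrow> x \<in> h U" if "x \<in> ?X1" "U \<in> ?C2" for x U using fprop that by blast
  have hpre: "h U = {x \<in> ?X1. f x \<in> U}" if U: "U \<in> ?C2" for U
  proof -
    have "h U \<subseteq> ?X1" using A1.CU_sub hCU U by blast
    then show ?thesis using fU U by blast
  qed
  have cont: "continuous_map T1 T2 f"
    unfolding continuous_map_def
  proof (intro conjI allI impI)
    show "f \<in> ?X1 \<rightarrow> ?X2" using fX by blast
    fix W assume W: "openin T2 W"
    show "openin T1 {x \<in> ?X1. f x \<in> W}"
    proof (rule openin_subopen[THEN iffD2], rule ballI)
      fix x assume x: "x \<in> {x \<in> ?X1. f x \<in> W}"
      then have xX: "x \<in> ?X1" and fxW: "f x \<in> W" by auto
      obtain U V where UV: "U \<in> ?C2" "V \<in> ?C2" "f x \<in> U" "f x \<notin> V" "U - V \<subseteq> W"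
        using A2.nbhd[OF W fxW] by blast
      have o: "openin T1 (h U - h V)" using hCU UV A1.CU_open A1.CU_closed by blast
      have "x \<in> h U - h V" using fU xX UV by blast
      moreover have "h U - h V \<subseteq> {x \<in> ?X1. f x \<in> W}" using hpre UV by blast
      ultimately show "\<exists>T'. openin T1 T' \<and> x \<in> T' \<and> T' \<subseteq> {x \<in> ?X1. f x \<in> W}" using o by blast
    qed
  qed
  have mono: "le2 (f x) (f y)" if xy: "x \<in> ?X1" "y \<in> ?X1" "le1 x y" for x y
  proof (rule ccontr)
    assume "\<not> le2 (f x) (f y)"
    then obtain U where U: "U \<in> ?C2" "f x \<in> U" "f y \<notin> U" using A2.psep fX xy by blast
    have "x \<in> h U" using fU xy U by blast
    then have "y \<in> h U" using A1.CU_up[OF hCU[OF U(1)]] xy by blast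
    then show False using fU xy U by blast
  qed
  have clo: "{x \<in> ?X1. f x \<in> T2 closure_of U} = T1 closure_of {x \<in> ?X1. f x \<in> U}"
    if U: "openin T2 U" "upset T2 le2 U" for U
  proof -
    define S where "S = {V \<in> ?C2. V \<subseteq> U}"
    have S: "S \<subseteq> ?C2" unfolding S_def by blast
    have US: "U = \<Union>S" unfolding S_def using A2.openup_union[OF U] .
    have "{x \<in> ?X1. f x \<in> T2 closure_of U} = h (T2 closure_of \<Union>S)"
      using hpre[OF A2.CU_join[OF S]] US by simp
    also have "\<dots> = T1 closure_of \<Union>(h ` S)" using hjoin[OF S] .
    also have "\<Union>(h ` S) = {x \<in> ?X1. f x \<in> U}"
    proof -
      have "\<Union>(h ` S) = \<Union>((\<lambda>V. {x \<in> ?X1. f x \<in> V}) ` S)" using hpre S by auto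
      also have "\<dots> = {x \<in> ?X1. f x \<in> \<Union>S}" by blast
      finally show ?thesis using US by simp
    qed
    finally show ?thesis .
  qed
  have Lm: "L_morphism T1 le1 T2 le2 f"
    unfolding L_morphism_def using cont mono clo by blast
  have coh: "{x \<in> ?X1. f x \<in> core T2 le2 U} \<subseteq> core T1 le1 {x \<in> ?X1. f x \<in> U}" if U: "U \<in> ?C2" for U
  proof
    fix x assume "x \<in> {x \<in> ?X1. f x \<in> core T2 le2 U}"
    then obtain V where V: "V \<in> ClopSUp T2 le2" "V \<subseteq> U" "f x \<in> V" and xX: "x \<in> ?X1"
      unfolding core_def by blast
    have VC: "V \<in> ?C2" using A2.CSU_CU[OF V(1)] .
    have "h V \<in> ClopSUp T1 le1" using A1.compact_CSU[OF hcomp[OF A2.CSU_compact[OF V(1)]]] .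
    moreover have "h V \<subseteq> {x \<in> ?X1. f x \<in> U}" using hpre[OF VC] V(2) by blast
    moreover have "x \<in> h V" using hpre[OF VC] V(3) xX by blast
    ultimately show "x \<in> core T1 le1 {x \<in> ?X1. f x \<in> U}" unfolding core_def by blast
  qed
  have "coherent_L_morphism T1 le1 T2 le2 f" unfolding coherent_L_morphism_def using Lm coh by blast
  then show ?thesis using hpre by blast
qed



context frm begin

lemma filt_gen:
  assumes fP: "filt P" and z: "z \<in> A"
  shows "filt {w\<in>A. \<exists>p\<in>P. M p z \<sqsubseteq> w}"
  unfolding filt_def
proof (intro conjI ballI impI)
  have PA: "P \<subseteq> A" using fP unfolding filt_def by blast
  show "{w\<in>A. \<exists>p\<in>P. M p z \<sqsubseteq> w} \<subseteq> A" by blast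
  obtain p where "p \<in> P" using fP unfolding filt_def by blast
  then have "M p z \<in> {w\<in>A. \<exists>p\<in>P. M p z \<sqsubseteq> w}" using PA z by (auto intro: M_in rfl)
  then show "{w\<in>A. \<exists>p\<in>P. M p z \<sqsubseteq> w} \<noteq> {}" by blast
  show "w' \<in> {w\<in>A. \<exists>p\<in>P. M p z \<sqsubseteq> w}" if "w \<in> {w\<in>A. \<exists>p\<in>P. M p z \<sqsubseteq> w}" "w' \<in> A" "w \<sqsubseteq> w'" for w w'
    using that PA z by (auto intro: trns M_in)
  show "M w w' \<in> {w\<in>A. \<exists>p\<in>P. M p z \<sqsubseteq> w}" if ww: "w \<in> {w\<in>A. \<exists>p\<in>P. M p z \<sqsubseteq> w}" "w' \<in> {w\<in>A. \<exists>p\<in>P. M p z \<sqsubseteq> w}" for w w'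
  proof -
    obtain p p' where p: "p \<in> P" "M p z \<sqsubseteq> w" "w \<in> A" and p': "p' \<in> P" "M p' z \<sqsubseteq> w'" "w' \<in> A"
      using ww by blast
    have pp: "M p p' \<in> P" using fP p p' unfolding filt_def by blast
    have pA: "p \<in> A" "p' \<in> A" using p p' PA by auto
    have "M (M p p') z \<sqsubseteq> M p z" using pA z by (intro M_mono M_in M_le1 rfl) auto
    then have 1: "M (M p p') z \<sqsubseteq> w" using pA z p by (meson M_in trns)
    have "M (M p p') z \<sqsubseteq> M p' z" using pA z by (intro M_mono M_in M_le2 rfl) auto
    then have 2: "M (M p p') z \<sqsubseteq> w'" using pA z p' by (meson M_in trns)
    have "M (M p p') z \<sqsubseteq> M w w'"
      using 1 2 pA z p p' by (intro M_greatest M_in) auto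
    then show ?thesis using pp p p' by (auto intro: M_in)
  qed
qed

definition "XP = {P. pf P}"
definition "phi a = {P \<in> XP. a \<in> P}"
definition "SB = phi ` A \<union> (\<lambda>a. XP - phi a) ` A"
definition "Top = topology (arbitrary union_of (finite intersection_of (\<lambda>S. S \<in> SB) relative_to XP))"

lemma XP_pf: "P \<in> XP \<Longrightarrow> pf P" unfolding XP_def by simp
lemma top_Top: "topspace Top = XP" unfolding Top_def by simp
lemma open_Top: "openin Top W \<longleftrightarrow> (arbitrary union_of (finite intersection_of (\<lambda>S. S \<in> SB) relative_to XP)) W"
  unfolding Top_def by (rule openin_subbase)

lemma phi_sub: "phi a \<subseteq> XP" unfolding phi_def by blast
lemma phi_tp: "phi tp = XP"
proof -
  have "tp \<in> P" if "P \<in> XP" for P using pf_tp[OF XP_pf[OF that]] .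
  then show ?thesis unfolding phi_def by blast
qed
lemma phi_bt: "phi bt = {}"
proof -
  have "bt \<notin> P" if "P \<in> XP" for P using pf_bt[OF XP_pf[OF that]] .
  then show ?thesis unfolding phi_def by blast
qed
lemma phi_M: assumes a: "a \<in> A" and b: "b \<in> A" shows "phi (M a b) = phi a \<inter> phi b"
proof -
  have "M a b \<in> P \<longleftrightarrow> a \<in> P \<and> b \<in> P" if "P \<in> XP" for P using pf_M[OF XP_pf[OF that] a b] .
  then show ?thesis unfolding phi_def by blast
qed
lemma phi_jn: assumes a: "a \<in> A" and b: "b \<in> A" shows "phi (jn a b) = phi a \<union> phi b"
proof -
  have "jn a b \<in> P \<longleftrightarrow> a \<in> P \<or> b \<in> P" if "P \<in> XP" for P using pf_jn[OF XP_pf[OF that] a b] .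
  then show ?thesis unfolding phi_def by blast
qed
lemma phi_mono: assumes a: "a \<in> A" and b: "b \<in> A" and ab: "a \<sqsubseteq> b" shows "phi a \<subseteq> phi b"
proof -
  have "a \<in> P \<Longrightarrow> b \<in> P" if "P \<in> XP" for P using pf_up[OF XP_pf[OF that] _ b ab] by blast
  then show ?thesis unfolding phi_def by blast
qed
lemma phi_le: "a \<in> A \<Longrightarrow> b \<in> A \<Longrightarrow> phi a \<subseteq> phi b \<Longrightarrow> a \<sqsubseteq> b"
proof (rule ccontr)
  assume a: "a \<in> A" and b: "b \<in> A" and ab: "phi a \<subseteq> phi b" and n: "\<not> a \<sqsubseteq> b"
  obtain P where "pf P" "a \<in> P" "b \<notin> P" using sep[OF a b n] by blast
  then show False using ab unfolding phi_def XP_def by blast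
qed
lemma phi_inj: "a \<in> A \<Longrightarrow> b \<in> A \<Longrightarrow> phi a = phi b \<Longrightarrow> a = b"
  by (metis asym phi_le subset_refl)

lemma sb_open: "S \<in> SB \<Longrightarrow> openin Top S"
proof -
  assume S: "S \<in> SB"
  have "S \<subseteq> XP" using S phi_sub unfolding SB_def by blast
  then have "S = XP \<inter> S" by blast
  moreover have "((finite intersection_of (\<lambda>S. S \<in> SB)) relative_to XP) (XP \<inter> S)"
    by (rule relative_to_inc, rule finite_intersection_of_inc) (rule S)
  ultimately show ?thesis unfolding open_Top by (metis arbitrary_union_of_inc)
qed

lemma phi_open: "a \<in> A \<Longrightarrow> openin Top (phi a)" using sb_open unfolding SB_def by blast
lemma phi_copen: "a \<in> A \<Longrightarrow> openin Top (XP - phi a)" using sb_open unfolding SB_def by blast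
lemma phi_closed: "a \<in> A \<Longrightarrow> closedin Top (phi a)"
  unfolding closedin_def top_Top using phi_copen phi_sub by blast
lemma phi_clopen: "a \<in> A \<Longrightarrow> clopenin Top (phi a)"
  unfolding clopenin_def using phi_open phi_closed by blast
lemma basic_open: "a \<in> A \<Longrightarrow> b \<in> A \<Longrightarrow> openin Top (phi a - phi b)"
  using openin_diff phi_open phi_closed by blast
lemma basic_clopen: "a \<in> A \<Longrightarrow> b \<in> A \<Longrightarrow> clopenin Top (phi a - phi b)"
proof -
  assume a: "a \<in> A" and b: "b \<in> A"
  have "XP - (phi a - phi b) = (XP - phi a) \<union> phi b" using phi_sub by blast
  moreover have "openin Top ((XP - phi a) \<union> phi b)" using phi_copen[OF a] phi_open[OF b] by blast
  ultimately have "closedin Top (phi a - phi b)" unfolding closedin_def top_Top using phi_sub by auto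
  then show ?thesis unfolding clopenin_def using basic_open a b by blast
qed

lemma fin_basic: "finite F \<Longrightarrow> F \<subseteq> SB \<Longrightarrow> \<exists>a\<in>A. \<exists>b\<in>A. XP \<inter> \<Inter>F = phi a - phi b"
proof (induction F rule: finite_induct)
  case empty
  have "XP = phi tp - phi bt" using phi_tp phi_bt by simp
  then show ?case using tp_in bt_in by auto
next
  case (insert S F)
  then obtain a b where ab: "a \<in> A" "b \<in> A" "XP \<inter> \<Inter>F = phi a - phi b" by blast
  have e0: "XP \<inter> \<Inter>(insert S F) = S \<inter> (XP \<inter> \<Inter>F)" by blast
  have "S \<in> SB" using insert.prems by blast
  then consider (p) c where "c \<in> A" "S = phi c" | (n) c where "c \<in> A" "S = XP - phi c"
    unfolding SB_def by blast
  then show ?case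
  proof cases
    case p
    have "XP \<inter> \<Inter>(insert S F) = S \<inter> (phi a - phi b)" unfolding e0 ab(3) ..
    also have "\<dots> = phi c \<inter> (phi a - phi b)" unfolding p(2) ..
    also have "\<dots> = phi (M c a) - phi b" using phi_M p(1) ab(1) by blast
    finally show ?thesis using M_in p(1) ab by blast
  next
    case n
    have "XP \<inter> \<Inter>(insert S F) = S \<inter> (phi a - phi b)" unfolding e0 ab(3) ..
    also have "\<dots> = (XP - phi c) \<inter> (phi a - phi b)" unfolding n(2) ..
    also have "\<dots> = phi a - phi (jn b c)" using phi_jn n(1) ab(2) phi_sub by blast
    finally show ?thesis using jn_in n(1) ab by blast
  qed
qed

lemma basic_nbhd:
  assumes W: "openin Top W" and P: "P \<in> W"
  shows "\<exists>a\<in>A. \<exists>b\<in>A. P \<in> phi a - phi b \<and> phi a - phi b \<subseteq> W"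
proof -
  have "(arbitrary union_of (finite intersection_of (\<lambda>S. S \<in> SB) relative_to XP)) W"
    using W open_Top by blast
  then obtain \<U> where U: "\<U> \<subseteq> Collect (finite intersection_of (\<lambda>S. S \<in> SB) relative_to XP)" "\<Union>\<U> = W"
    unfolding union_of_def by blast
  then obtain V where V: "V \<in> \<U>" "P \<in> V" using P by blast
  then have "(finite intersection_of (\<lambda>S. S \<in> SB) relative_to XP) V" using U by blast
  then obtain F where F: "finite F" "F \<subseteq> SB" "XP \<inter> \<Inter>F = V"
    unfolding relative_to_def intersection_of_def by auto
  then obtain a b where ab: "a \<in> A" "b \<in> A" "XP \<inter> \<Inter>F = phi a - phi b" using fin_basic by blast
  have "V \<subseteq> W" using V U by blast
  then show ?thesis using ab F V by auto
qed

lemma cpt_Top: "compact_space Top"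
proof (rule Alexander_subbase_alt[of XP SB])
  show "XP \<subseteq> \<Union>SB" using phi_tp tp_in unfolding SB_def by blast
  show "topology (arbitrary union_of (finite intersection_of (\<lambda>x. x \<in> SB) relative_to XP)) = Top"
    unfolding Top_def ..
  fix C assume C: "C \<subseteq> SB" and XC: "XP \<subseteq> \<Union>C"
  define Aa where "Aa = {a\<in>A. phi a \<in> C}"
  define Bb where "Bb = {b\<in>A. XP - phi b \<in> C}"
  define I where "I = {x\<in>A. \<exists>T. finite T \<and> T \<subseteq> Aa \<and> x \<sqsubseteq> J T}"
  define G where "G = {x\<in>A. \<exists>T. finite T \<and> T \<subseteq> Bb \<and> Mt T \<sqsubseteq> x}"
  have AaA: "Aa \<subseteq> A" and BbA: "Bb \<subseteq> A" unfolding Aa_def Bb_def by auto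
  have "G \<inter> I \<noteq> {}"
  proof
    assume GI: "G \<inter> I = {}"
    have fG: "filt G" unfolding filt_def
    proof (intro conjI ballI impI)
      show "G \<subseteq> A" unfolding G_def by blast
      have "Mt {} \<sqsubseteq> tp" using tp_top Mt_in by blast
      then have "tp \<in> G" unfolding G_def using tp_in by blast
      then show "G \<noteq> {}" by blast
      show "y \<in> G" if xy: "x \<in> G" "y \<in> A" "x \<sqsubseteq> y" for x y
      proof -
        obtain T where T: "finite T" "T \<subseteq> Bb" "Mt T \<sqsubseteq> x" "x \<in> A" using xy(1) unfolding G_def by blast
        have "Mt T \<sqsubseteq> y" using trns[OF Mt_in T(4) xy(2) T(3) xy(3)] .
        then show ?thesis unfolding G_def using T xy(2) by blast
      qed
      show "M x y \<in> G" if xy: "x \<in> G" "y \<in> G" for x y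
      proof -
        obtain T1 where T1: "finite T1" "T1 \<subseteq> Bb" "Mt T1 \<sqsubseteq> x" "x \<in> A" using xy(1) unfolding G_def by blast
        obtain T2 where T2: "finite T2" "T2 \<subseteq> Bb" "Mt T2 \<sqsubseteq> y" "y \<in> A" using xy(2) unfolding G_def by blast
        have U: "T1 \<union> T2 \<subseteq> A" using T1 T2 BbA by blast
        have "Mt (T1 \<union> T2) \<sqsubseteq> Mt T1" "Mt (T1 \<union> T2) \<sqsubseteq> Mt T2" using Mt_anti U by auto
        then have "Mt (T1 \<union> T2) \<sqsubseteq> x" "Mt (T1 \<union> T2) \<sqsubseteq> y"
          using trns[OF Mt_in Mt_in T1(4) _ T1(3)] trns[OF Mt_in Mt_in T2(4) _ T2(3)] by auto
        then have "Mt (T1 \<union> T2) \<sqsubseteq> M x y" using M_greatest Mt_in T1(4) T2(4) by blast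
        moreover have "finite (T1 \<union> T2)" "T1 \<union> T2 \<subseteq> Bb" using T1 T2 by auto
        ultimately show ?thesis unfolding G_def using M_in T1(4) T2(4) by blast
      qed
    qed
    have iI: "idl I" unfolding idl_def
    proof (intro conjI ballI impI)
      show "I \<subseteq> A" unfolding I_def by blast
      have "bt \<sqsubseteq> J {}" using bt_def bt_in rfl by simp
      then have "bt \<in> I" unfolding I_def using bt_in by blast
      then show "I \<noteq> {}" by blast
      show "y \<in> I" if xy: "x \<in> I" "y \<in> A" "y \<sqsubseteq> x" for x y
      proof -
        obtain T where T: "finite T" "T \<subseteq> Aa" "x \<sqsubseteq> J T" "x \<in> A" using xy(1) unfolding I_def by blast
        have TA: "T \<subseteq> A" using T(2) AaA by blast
        have "y \<sqsubseteq> J T" using trns[OF xy(2) T(4) J_in[OF TA] xy(3) T(3)] .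
        then show ?thesis unfolding I_def using T xy(2) by blast
      qed
      show "jn x y \<in> I" if xy: "x \<in> I" "y \<in> I" for x y
      proof -
        obtain T1 where T1: "finite T1" "T1 \<subseteq> Aa" "x \<sqsubseteq> J T1" "x \<in> A" using xy(1) unfolding I_def by blast
        obtain T2 where T2: "finite T2" "T2 \<subseteq> Aa" "y \<sqsubseteq> J T2" "y \<in> A" using xy(2) unfolding I_def by blast
        have U: "T1 \<union> T2 \<subseteq> A" using T1 T2 AaA by blast
        have "J T1 \<sqsubseteq> J (T1 \<union> T2)" "J T2 \<sqsubseteq> J (T1 \<union> T2)" using J_mono U by auto
        moreover have "T1 \<subseteq> A" "T2 \<subseteq> A" using U by auto
        ultimately have "x \<sqsubseteq> J (T1 \<union> T2)" "y \<sqsubseteq> J (T1 \<union> T2)"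
          using trns[OF T1(4) J_in J_in[OF U] T1(3)] trns[OF T2(4) J_in J_in[OF U] T2(3)] by auto
        then have "jn x y \<sqsubseteq> J (T1 \<union> T2)" using jn_least J_in U T1(4) T2(4) by blast
        moreover have "finite (T1 \<union> T2)" "T1 \<union> T2 \<subseteq> Aa" using T1 T2 by auto
        ultimately show ?thesis unfolding I_def using jn_in T1(4) T2(4) by blast
      qed
    qed
    obtain P where P: "pf P" "G \<subseteq> P" "P \<inter> I = {}" using pft[OF fG iI GI] by blast
    have "P \<in> XP" using P unfolding XP_def by simp
    then obtain S where S: "S \<in> C" "P \<in> S" using XC by blast
    then have "S \<in> SB" using C by blast
    then consider (p) c where "c \<in> A" "S = phi c" | (n) c where "c \<in> A" "S = XP - phi c"
      unfolding SB_def by blast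
    then show False
    proof cases
      case p
      then have cA: "c \<in> Aa" unfolding Aa_def using S by blast
      have "c \<sqsubseteq> J {c}" using J_ub p(1) by blast
      then have "c \<in> I" unfolding I_def using cA p(1) by blast
      moreover have "c \<in> P" using S p unfolding phi_def by blast
      ultimately show False using P by blast
    next
      case n
      then have cB: "c \<in> Bb" unfolding Bb_def using S by blast
      have "Mt {c} \<sqsubseteq> c" using Mt_lb n(1) by blast
      then have "c \<in> G" unfolding G_def using cB n(1) by blast
      moreover have "c \<notin> P" using S n unfolding phi_def by blast
      ultimately show False using P by blast
    qed
  qed
  then obtain x where x: "x \<in> G" "x \<in> I" by blast
  obtain T2 where T2: "finite T2" "T2 \<subseteq> Bb" "Mt T2 \<sqsubseteq> x" "x \<in> A" using x(1) unfolding G_def by blast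
  obtain T1 where T1: "finite T1" "T1 \<subseteq> Aa" "x \<sqsubseteq> J T1" using x(2) unfolding I_def by blast
  have T1A: "T1 \<subseteq> A" using T1 AaA by blast
  have MJ: "Mt T2 \<sqsubseteq> J T1" using trns[OF Mt_in T2(4) J_in[OF T1A] T2(3) T1(3)] .
  define C' where "C' = phi ` T1 \<union> (\<lambda>b. XP - phi b) ` T2"
  have "finite C'" unfolding C'_def using T1 T2 by blast
  moreover have "C' \<subseteq> C"
  proof -
    have "phi ` T1 \<subseteq> C" using T1(2) unfolding Aa_def by blast
    moreover have "(\<lambda>b. XP - phi b) ` T2 \<subseteq> C" using T2(2) unfolding Bb_def by blast
    ultimately show ?thesis unfolding C'_def by blast
  qed
  moreover have "XP \<subseteq> \<Union>C'"
  proof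
    fix P assume PX: "P \<in> XP"
    have pP: "pf P" using XP_pf PX .
    show "P \<in> \<Union>C'"
    proof (cases "T2 \<subseteq> P")
      case False
      then obtain b where "b \<in> T2" "b \<notin> P" by blast
      then have "P \<in> XP - phi b" "XP - phi b \<in> C'" using PX unfolding phi_def C'_def by auto
      then show ?thesis by blast
    next
      case True
      then have "Mt T2 \<in> P" using pf_Mt[OF pP T2(1)] by blast
      then have "J T1 \<in> P" using pf_up[OF pP _ J_in[OF T1A] MJ] by blast
      then obtain t where "t \<in> T1" "t \<in> P" using pf_J[OF pP T1(1) T1A] by blast
      then have "P \<in> phi t" "phi t \<in> C'" using PX unfolding phi_def C'_def by auto
      then show ?thesis by blast
    qed
  qed
  ultimately show "\<exists>C'. finite C' \<and> C' \<subseteq> C \<and> XP \<subseteq> \<Union>C'" by blast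
qed

lemma cover_Top: assumes "closedin Top F" "\<And>U. U \<in> \<U> \<Longrightarrow> openin Top U" "F \<subseteq> \<Union>\<U>"
  shows "\<exists>\<F>. finite \<F> \<and> \<F> \<subseteq> \<U> \<and> F \<subseteq> \<Union>\<F>"
proof -
  have "compactin Top F" using closedin_compact_space[OF cpt_Top assms(1)] .
  then have "\<forall>\<U>. (\<forall>U \<in> \<U>. openin Top U) \<and> F \<subseteq> \<Union>\<U> \<longrightarrow> (\<exists>\<F>. finite \<F> \<and> \<F> \<subseteq> \<U> \<and> F \<subseteq> \<Union>\<F>)"
    unfolding compactin_def by blast
  then show ?thesis using assms(2,3) by blast
qed

lemma sep_closed:
  assumes K: "closedin Top K" and P: "P \<in> XP" and nP: "\<And>R. R \<in> K \<Longrightarrow> \<not> P \<subseteq> R"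
  shows "\<exists>a\<in>A. P \<in> phi a \<and> phi a \<inter> K = {}"
proof -
  have pP: "pf P" using XP_pf P .
  have PA: "P \<subseteq> A" using pf_sub pP .
  define G where "G = (\<lambda>a. XP - phi a) ` P"
  have Gop: "U \<in> G \<Longrightarrow> openin Top U" for U unfolding G_def using phi_copen PA by blast
  have KG: "K \<subseteq> \<Union>G"
  proof
    fix R assume R: "R \<in> K"
    then obtain a where a: "a \<in> P" "a \<notin> R" using nP by blast
    have "R \<in> XP" using closedin_subset[OF K] R unfolding top_Top by blast
    then have "R \<in> XP - phi a" unfolding phi_def using a by blast
    then show "R \<in> \<Union>G" unfolding G_def using a by blast
  qed
  have "\<exists>F. finite F \<and> F \<subseteq> G \<and> K \<subseteq> \<Union>F" by (rule cover_Top[OF K Gop KG])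
  then obtain F where F: "finite F" "F \<subseteq> G" "K \<subseteq> \<Union>F" by blast
  then obtain T0 where T0: "T0 \<subseteq> P" "finite T0" "F = (\<lambda>a. XP - phi a) ` T0"
    unfolding G_def by (meson finite_subset_image)
  have T0A: "T0 \<subseteq> A" using T0 PA by blast
  have aP: "Mt T0 \<in> P" using pf_Mt[OF pP T0(2) T0(1)] .
  have "phi (Mt T0) \<inter> K = {}"
  proof -
    { fix R assume R: "R \<in> phi (Mt T0)" "R \<in> K"
      have "K \<subseteq> \<Union>((\<lambda>a. XP - phi a) ` T0)" using F(3) unfolding T0(3) .
      then obtain t where t: "t \<in> T0" "R \<in> XP - phi t" using R(2) by blast
      have "Mt T0 \<in> R" "pf R" using R unfolding phi_def XP_def by auto
      moreover have "t \<in> A" using T0A t(1) by blast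
      ultimately have "t \<in> R" using pf_up[OF _ _ _ Mt_lb[OF T0A t(1)]] by blast
      then have False using t unfolding phi_def by blast }
    then show ?thesis by blast
  qed
  then show ?thesis using aP P Mt_in unfolding phi_def by blast
qed

lemma openup_phi:
  assumes W: "openin Top W" and up: "\<And>P Q. P \<in> W \<Longrightarrow> Q \<in> XP \<Longrightarrow> P \<subseteq> Q \<Longrightarrow> Q \<in> W"
  shows "W = \<Union>(phi ` {a\<in>A. phi a \<subseteq> W})"
proof
  show "\<Union>(phi ` {a\<in>A. phi a \<subseteq> W}) \<subseteq> W" by blast
  show "W \<subseteq> \<Union>(phi ` {a\<in>A. phi a \<subseteq> W})"
  proof
    fix P assume P: "P \<in> W"
    have PX: "P \<in> XP" using openin_subset[OF W] P unfolding top_Top by blast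
    have K: "closedin Top (XP - W)" using W top_Top by (metis closedin_diff closedin_topspace)
    have "\<not> P \<subseteq> R" if "R \<in> XP - W" for R using that up P by blast
    then obtain a where a: "a \<in> A" "P \<in> phi a" "phi a \<inter> (XP - W) = {}" using sep_closed[OF K PX] by blast
    then have "phi a \<subseteq> W" using phi_sub by blast
    then show "P \<in> \<Union>(phi ` {a\<in>A. phi a \<subseteq> W})" using a by blast
  qed
qed

lemma cl_phi:
  assumes S: "S \<subseteq> A"
  shows "Top closure_of \<Union>(phi ` S) = phi (J S)"
proof
  show "Top closure_of \<Union>(phi ` S) \<subseteq> phi (J S)"
  proof (rule closure_of_minimal)
    show "\<Union>(phi ` S) \<subseteq> phi (J S)"
    proof
      fix P assume "P \<in> \<Union>(phi ` S)"
      then obtain s where s: "s \<in> S" "P \<in> phi s" by blast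
      have "phi s \<subseteq> phi (J S)" using phi_mono[OF _ J_in[OF S] J_ub[OF S s(1)]] s(1) S by blast
      then show "P \<in> phi (J S)" using s by blast
    qed
    show "closedin Top (phi (J S))" using phi_closed J_in S by blast
  qed
  show "phi (J S) \<subseteq> Top closure_of \<Union>(phi ` S)"
  proof
    fix P assume P: "P \<in> phi (J S)"
    have PX: "P \<in> XP" and JP: "J S \<in> P" using P unfolding phi_def by auto
    have pP: "pf P" using XP_pf PX .
    show "P \<in> Top closure_of \<Union>(phi ` S)"
      unfolding in_closure_of top_Top
    proof (intro conjI allI impI)
      show "P \<in> XP" by (rule PX)
      fix W assume "P \<in> W \<and> openin Top W"
      then obtain c d where cd: "c \<in> A" "d \<in> A" "P \<in> phi c - phi d" "phi c - phi d \<subseteq> W"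
        using basic_nbhd by blast
      have "\<exists>s\<in>S. \<not> M c s \<sqsubseteq> d"
      proof (rule ccontr)
        assume "\<not> (\<exists>s\<in>S. \<not> M c s \<sqsubseteq> d)"
        then have "J ((\<lambda>s. M c s) ` S) \<sqsubseteq> d" using S cd by (intro J_least) (auto intro: M_in)
        then have "M c (J S) \<sqsubseteq> d" using dist[OF cd(1) S] by simp
        moreover have "c \<in> P" using cd(3) unfolding phi_def by blast
        then have "M c (J S) \<in> P" using pf_M[OF pP cd(1) J_in[OF S]] JP by blast
        ultimately have "d \<in> P" using pf_up[OF pP _ cd(2)] by blast
        then show False using cd(3) PX unfolding phi_def by blast
      qed
      then obtain s where s: "s \<in> S" "\<not> M c s \<sqsubseteq> d" by blast
      have sA: "s \<in> A" using s S by blast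
      obtain Q where Q: "pf Q" "M c s \<in> Q" "d \<notin> Q" using sep[OF M_in[OF cd(1) sA] cd(2) s(2)] by blast
      have "c \<in> Q" "s \<in> Q" using pf_M[OF Q(1) cd(1) sA] Q by auto
      then have "Q \<in> phi c - phi d" "Q \<in> phi s" using Q unfolding phi_def XP_def by auto
      then show "\<exists>y. y \<in> \<Union>(phi ` S) \<and> y \<in> W" using cd(4) s(1) by blast
    qed
  qed
qed

end



context frm begin

lemma pri_Top: "priestley_space Top (\<subseteq>)"
  unfolding priestley_space_def
proof (intro conjI ballI impI)
  show "stone_space Top" unfolding stone_space_def
  proof (intro conjI allI impI ballI)
    show "compact_space Top" by (rule cpt_Top)
    show "Hausdorff_space Top" unfolding Hausdorff_space_def top_Top
    proof (intro allI impI)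
      fix P Q assume PQ: "P \<in> XP \<and> Q \<in> XP \<and> P \<noteq> Q"
      have PA: "P \<subseteq> A" "Q \<subseteq> A" using PQ XP_pf pf_sub by blast+
      show "\<exists>U V. openin Top U \<and> openin Top V \<and> P \<in> U \<and> Q \<in> V \<and> disjnt U V"
      proof (cases "P \<subseteq> Q")
        case False
        then obtain a where a: "a \<in> P" "a \<notin> Q" by blast
        have aA: "a \<in> A" using a PA by blast
        have "P \<in> phi a" "Q \<in> XP - phi a" using a PQ unfolding phi_def by auto
        moreover have "disjnt (phi a) (XP - phi a)" unfolding disjnt_def by blast
        ultimately show ?thesis using phi_open[OF aA] phi_copen[OF aA] by blast
      next
        case True
        then obtain a where a: "a \<in> Q" "a \<notin> P" using PQ by blast
        have aA: "a \<in> A" using a PA by blast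
        have "Q \<in> phi a" "P \<in> XP - phi a" using a PQ unfolding phi_def by auto
        moreover have "disjnt (XP - phi a) (phi a)" unfolding disjnt_def by blast
        ultimately show ?thesis using phi_open[OF aA] phi_copen[OF aA] by blast
      qed
    qed
    fix U P assume U: "openin Top U" and P: "P \<in> U"
    obtain a b where "a \<in> A" "b \<in> A" "P \<in> phi a - phi b" "phi a - phi b \<subseteq> U"
      using basic_nbhd[OF U P] by blast
    then show "\<exists>C. clopenin Top C \<and> P \<in> C \<and> C \<subseteq> U" using basic_clopen by blast
  qed
  show "poset_on (topspace Top) (\<subseteq>)" unfolding poset_on_def by blast
  fix P Q assume P: "P \<in> topspace Top" and Q: "Q \<in> topspace Top" and PQ: "\<not> P \<subseteq> Q"
  then obtain a where a: "a \<in> P" "a \<notin> Q" by blast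
  have aA: "a \<in> A" using a P XP_pf pf_sub top_Top by blast
  have "upset Top (\<subseteq>) (phi a)" unfolding upset_def top_Top phi_def by blast
  moreover have "P \<in> phi a" "Q \<notin> phi a" using a P top_Top unfolding phi_def by auto
  ultimately show "\<exists>U. clopenin Top U \<and> upset Top (\<subseteq>) U \<and> P \<in> U \<and> Q \<notin> U"
    using phi_clopen[OF aA] by blast
qed

lemma down_Top:
  assumes C: "clopenin Top C"
  shows "clopenin Top (downclosure Top (\<subseteq>) C)"
proof -
  define D where "D = downclosure Top (\<subseteq>) C"
  have D_eq: "D = {Q\<in>XP. \<exists>R\<in>C. Q \<subseteq> R}" unfolding D_def downclosure_def top_Top by simp
  have CX: "C \<subseteq> XP" using C clopen_sub top_Top by blast
  have Cc: "closedin Top C" and Co: "openin Top C" using C unfolding clopenin_def by auto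
  have "openin Top (XP - D)"
  proof (rule openin_subopen[THEN iffD2], rule ballI)
    fix Q assume Q: "Q \<in> XP - D"
    have "\<not> Q \<subseteq> R" if "R \<in> C" for R using Q that unfolding D_eq by blast
    then obtain a where a: "a \<in> A" "Q \<in> phi a" "phi a \<inter> C = {}" using sep_closed[OF Cc] Q by blast
    have "phi a \<subseteq> XP - D"
    proof
      fix R' assume R': "R' \<in> phi a"
      show "R' \<in> XP - D"
      proof
        show "R' \<in> XP" using R' phi_sub by blast
        show "R' \<notin> D"
        proof
          assume "R' \<in> D"
          then obtain R where R: "R \<in> C" "R' \<subseteq> R" unfolding D_eq by blast
          have "R \<in> phi a" using R R' CX unfolding phi_def by blast
          then show False using a(3) R(1) by blast
        qed
      qed
    qed
    then show "\<exists>T'. openin Top T' \<and> Q \<in> T' \<and> T' \<subseteq> XP - D" using phi_open[OF a(1)] a(2) by blast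
  qed
  then have Dc: "closedin Top D" unfolding closedin_def top_Top D_eq by blast
  have "openin Top D"
  proof (rule openin_subopen[THEN iffD2], rule ballI)
    fix P assume P: "P \<in> D"
    then obtain Q where Q: "Q \<in> C" "P \<subseteq> Q" and PX: "P \<in> XP" unfolding D_eq by blast
    obtain a b where ab: "a \<in> A" "b \<in> A" "Q \<in> phi a - phi b" "phi a - phi b \<subseteq> C"
      using basic_nbhd[OF Co Q(1)] by blast
    define e where "e = imp a b"
    have eA: "e \<in> A" unfolding e_def by (rule imp_in)
    have pQ: "pf Q" using Q(1) CX XP_pf by blast
    have aQ: "a \<in> Q" and bQ: "b \<notin> Q" using ab(3) unfolding phi_def by auto
    have "e \<notin> P"
    proof
      assume "e \<in> P"
      then have "e \<in> Q" using Q by blast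
      then have "M e a \<in> Q" using pf_M[OF pQ eA ab(1)] aQ by blast
      moreover have "M e a \<sqsubseteq> b" unfolding e_def using imp_mp ab by blast
      ultimately have "b \<in> Q" using pf_up[OF pQ _ ab(2)] by blast
      then show False using bQ by blast
    qed
    then have "P \<in> XP - phi e" using PX unfolding phi_def by blast
    moreover have "XP - phi e \<subseteq> D"
    proof
      fix R assume R: "R \<in> XP - phi e"
      have RX: "R \<in> XP" and eR: "e \<notin> R" using R unfolding phi_def by auto
      have pR: "pf R" using XP_pf RX .
      have RA: "R \<subseteq> A" using pf_sub pR .
      have fR: "filt R" using pR unfolding pf_def by blast
      define G where "G = {w\<in>A. \<exists>r\<in>R. M r a \<sqsubseteq> w}"
      have fG: "filt G" unfolding G_def using filt_gen[OF fR ab(1)] .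
      have GI: "G \<inter> {y\<in>A. y \<sqsubseteq> b} = {}"
      proof -
        { fix w assume w: "w \<in> G" "w \<in> A" "w \<sqsubseteq> b"
          then obtain r where r: "r \<in> R" "M r a \<sqsubseteq> w" unfolding G_def by blast
          have rA: "r \<in> A" using r RA by blast
          have "M r a \<sqsubseteq> b" using trns[OF M_in[OF rA ab(1)] w(2) ab(2) r(2) w(3)] .
          then have "r \<sqsubseteq> e" unfolding e_def using imp_ge[OF ab(1) ab(2) rA] by blast
          then have "e \<in> R" using pf_up[OF pR r(1) eA] by blast
          then have False using eR by blast }
        then show ?thesis by blast
      qed
      obtain Q' where Q': "pf Q'" "G \<subseteq> Q'" "Q' \<inter> {y\<in>A. y \<sqsubseteq> b} = {}"
        using pft[OF fG idl_dn[OF ab(2)] GI] by blast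
      have "R \<subseteq> Q'"
      proof
        fix r assume r: "r \<in> R"
        have rA: "r \<in> A" using r RA by blast
        have "M r a \<sqsubseteq> r" using M_le1[OF rA ab(1)] .
        then have "r \<in> G" unfolding G_def using r rA by blast
        then show "r \<in> Q'" using Q' by blast
      qed
      moreover have "a \<in> Q'"
      proof -
        have "tp \<in> R" using pf_tp[OF pR] .
        moreover have "M tp a \<sqsubseteq> a" using M_le2[OF tp_in ab(1)] .
        ultimately have "a \<in> G" unfolding G_def using ab(1) by blast
        then show ?thesis using Q' by blast
      qed
      moreover have "b \<notin> Q'" using Q'(3) ab(2) rfl by blast
      ultimately have "Q' \<in> phi a - phi b" using Q'(1) unfolding phi_def XP_def by blast
      then have "Q' \<in> C" using ab(4) by blast
      then show "R \<in> D" unfolding D_eq using RX \<open>R \<subseteq> Q'\<close> by blast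
    qed
    ultimately show "\<exists>T'. openin Top T' \<and> P \<in> T' \<and> T' \<subseteq> D" using phi_copen[OF eA] by blast
  qed
  then show ?thesis using Dc unfolding clopenin_def D_def by blast
qed

lemma clo_Top:
  assumes W: "openin Top W" and up: "upset Top (\<subseteq>) W"
  shows "openin Top (Top closure_of W)"
proof -
  define S where "S = {a\<in>A. phi a \<subseteq> W}"
  have S: "S \<subseteq> A" unfolding S_def by blast
  have "W = \<Union>(phi ` S)" unfolding S_def
    by (rule openup_phi[OF W]) (use up in \<open>auto simp: upset_def top_Top\<close>)
  then have "Top closure_of W = phi (J S)" using cl_phi[OF S] by simp
  then show ?thesis using phi_open J_in S by simp
qed

lemma Lsp_Top: "L_space Top (\<subseteq>)"
  unfolding L_space_def using pri_Top down_Top clo_Top by blast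

lemma CU_Top: "ClopUp Top (\<subseteq>) = phi ` A"
proof
  show "phi ` A \<subseteq> ClopUp Top (\<subseteq>)"
  proof
    fix U assume "U \<in> phi ` A"
    then obtain a where a: "a \<in> A" "U = phi a" by blast
    have "upset Top (\<subseteq>) (phi a)" unfolding upset_def top_Top phi_def by blast
    then show "U \<in> ClopUp Top (\<subseteq>)" unfolding ClopUp_def using phi_clopen[OF a(1)] a(2) by blast
  qed
  show "ClopUp Top (\<subseteq>) \<subseteq> phi ` A"
  proof
    fix U assume U: "U \<in> ClopUp Top (\<subseteq>)"
    have Uo: "openin Top U" and Uc: "closedin Top U" and Uu: "upset Top (\<subseteq>) U"
      using U unfolding ClopUp_def clopenin_def by auto
    define S where "S = {a\<in>A. phi a \<subseteq> U}"
    have S: "S \<subseteq> A" unfolding S_def by blast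
    have "U = \<Union>(phi ` S)" unfolding S_def
      by (rule openup_phi[OF Uo]) (use Uu in \<open>auto simp: upset_def top_Top\<close>)
    then have "Top closure_of U = phi (J S)" using cl_phi[OF S] by simp
    then have "U = phi (J S)" using closure_of_closedin[OF Uc] by simp
    then show "U \<in> phi ` A" using J_in S by blast
  qed
qed

lemma min_cp:
  assumes k: "k \<in> compact_elems A le" and P: "P \<in> minimals (\<subseteq>) (phi k)"
    and S: "S \<subseteq> A" and JS: "J S \<in> P"
  shows "\<exists>s\<in>S. s \<in> P"
proof (rule ccontr)
  assume nS: "\<not> (\<exists>s\<in>S. s \<in> P)"
  have kA: "k \<in> A" and wb: "way_below A le k k" using k unfolding compact_elems_def by auto
  have Pk: "P \<in> phi k" and Pmin: "\<And>Q. Q \<in> phi k \<Longrightarrow> Q \<subseteq> P \<Longrightarrow> Q = P"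
    using P unfolding minimals_def by auto
  have PX: "P \<in> XP" and kP: "k \<in> P" using Pk unfolding phi_def by auto
  have pP: "pf P" using XP_pf PX .
  have PA: "P \<subseteq> A" using pf_sub pP .
  define p where "p = J S"
  have pA: "p \<in> A" unfolding p_def using J_in S .
  have btP: "bt \<notin> P" using pf_bt pP .
  have "\<exists>c\<in>A. c \<notin> P \<and> k \<sqsubseteq> jn c p"
  proof (rule ccontr)
    assume nc: "\<not> (\<exists>c\<in>A. c \<notin> P \<and> k \<sqsubseteq> jn c p)"
    define I where "I = {x\<in>A. \<exists>c\<in>A. c \<notin> P \<and> x \<sqsubseteq> jn c p}"
    have iI: "idl I" unfolding idl_def
    proof (intro conjI ballI impI)
      show "I \<subseteq> A" unfolding I_def by blast
      have "bt \<sqsubseteq> jn bt p" using jn_ub1[OF bt_in pA] .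
      then have "bt \<in> I" unfolding I_def using bt_in btP by blast
      then show "I \<noteq> {}" by blast
      show "y \<in> I" if xy: "x \<in> I" "y \<in> A" "y \<sqsubseteq> x" for x y
      proof -
        obtain c where c: "c \<in> A" "c \<notin> P" "x \<sqsubseteq> jn c p" "x \<in> A" using xy(1) unfolding I_def by blast
        have "y \<sqsubseteq> jn c p" using trns[OF xy(2) c(4) jn_in[OF c(1) pA] xy(3) c(3)] .
        then show ?thesis unfolding I_def using c xy(2) by blast
      qed
      show "jn x y \<in> I" if xy: "x \<in> I" "y \<in> I" for x y
      proof -
        obtain c where c: "c \<in> A" "c \<notin> P" "x \<sqsubseteq> jn c p" "x \<in> A" using xy(1) unfolding I_def by blast
        obtain d where d: "d \<in> A" "d \<notin> P" "y \<sqsubseteq> jn d p" "y \<in> A" using xy(2) unfolding I_def by blast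
        define cd where "cd = jn c d"
        have cdA: "cd \<in> A" unfolding cd_def using jn_in c d by blast
        have cdP: "cd \<notin> P" unfolding cd_def using pf_jn[OF pP c(1) d(1)] c d by blast
        have big: "jn cd p \<in> A" using jn_in cdA pA by blast
        have "c \<sqsubseteq> jn cd p" using trns[OF c(1) cdA big] jn_ub1 jn_ub1[OF cdA pA] c(1) d(1) unfolding cd_def by blast
        moreover have "p \<sqsubseteq> jn cd p" using jn_ub2[OF cdA pA] .
        ultimately have "jn c p \<sqsubseteq> jn cd p" using jn_least[OF c(1) pA big] by blast
        then have 1: "x \<sqsubseteq> jn cd p" using trns[OF c(4) jn_in[OF c(1) pA] big c(3)] by blast
        have "d \<sqsubseteq> jn cd p" using trns[OF d(1) cdA big] jn_ub2 jn_ub1[OF cdA pA] c(1) d(1) unfolding cd_def by blast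
        then have "jn d p \<sqsubseteq> jn cd p" using jn_least[OF d(1) pA big] jn_ub2[OF cdA pA] by blast
        then have 2: "y \<sqsubseteq> jn cd p" using trns[OF d(4) jn_in[OF d(1) pA] big d(3)] by blast
        have "jn x y \<sqsubseteq> jn cd p" using jn_least[OF c(4) d(4) big 1 2] .
        then show ?thesis unfolding I_def using jn_in[OF c(4) d(4)] cdA cdP by blast
      qed
    qed
    have GI: "{y\<in>A. k \<sqsubseteq> y} \<inter> I = {}"
    proof -
      { fix x assume x: "x \<in> A" "k \<sqsubseteq> x" "x \<in> I"
        then obtain c where c: "c \<in> A" "c \<notin> P" "x \<sqsubseteq> jn c p" unfolding I_def by blast
        have "k \<sqsubseteq> jn c p" using trns[OF kA x(1) jn_in[OF c(1) pA] x(2) c(3)] .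
        then have False using nc c by blast }
      then show ?thesis by blast
    qed
    obtain Q where Q: "pf Q" "{y\<in>A. k \<sqsubseteq> y} \<subseteq> Q" "Q \<inter> I = {}"
      using pft[OF filt_up[OF kA] iI GI] by blast
    have kQ: "k \<in> Q" using Q(2) kA rfl by blast
    have QA: "Q \<subseteq> A" using pf_sub Q(1) .
    have "Q \<subseteq> P"
    proof
      fix x assume x: "x \<in> Q"
      have xA: "x \<in> A" using x QA by blast
      show "x \<in> P"
      proof (rule ccontr)
        assume "x \<notin> P"
        moreover have "x \<sqsubseteq> jn x p" using jn_ub1[OF xA pA] .
        ultimately have "x \<in> I" unfolding I_def using xA by blast
        then show False using x Q(3) by blast
      qed
    qed
    moreover have "Q \<in> phi k" using Q(1) kQ unfolding phi_def XP_def by blast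
    ultimately have "Q = P" using Pmin by blast
    moreover have "p \<in> I"
    proof -
      have "p \<sqsubseteq> jn bt p" using jn_ub2[OF bt_in pA] .
      then show ?thesis unfolding I_def using pA bt_in btP by blast
    qed
    moreover have "p \<in> P" using JS unfolding p_def .
    ultimately show False using Q(3) by blast
  qed
  then obtain c where c: "c \<in> A" "c \<notin> P" "k \<sqsubseteq> jn c p" by blast
  have icS: "insert c S \<subseteq> A" using c(1) S by blast
  have "k \<sqsubseteq> J (insert c S)" using J_insert[OF c(1) S] c(3) unfolding p_def by simp
  then obtain T where T: "T \<subseteq> insert c S" "finite T" "k \<sqsubseteq> J T"
    using wb icS unfolding way_below_def by blast
  have TA: "T \<subseteq> A" using T(1) icS by blast
  have "J T \<in> P" using pf_up[OF pP kP J_in[OF TA] T(3)] .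
  then obtain t where "t \<in> T" "t \<in> P" using pf_J[OF pP T(2) TA] by blast
  then show False using T(1) c(2) nS by blast
qed

lemma down_pt:
  assumes PX: "P \<in> XP" and cp: "\<And>S. S \<subseteq> A \<Longrightarrow> J S \<in> P \<Longrightarrow> \<exists>s\<in>S. s \<in> P"
  shows "clopenin Top (downclosure Top (\<subseteq>) {P})"
proof -
  have pP: "pf P" using XP_pf PX .
  define b where "b = J (A - P)"
  have bA: "b \<in> A" unfolding b_def by (rule J_in) blast
  have bP: "b \<notin> P" using cp[of "A - P"] unfolding b_def by blast
  have eq: "downclosure Top (\<subseteq>) {P} = XP - phi b"
  proof
    show "downclosure Top (\<subseteq>) {P} \<subseteq> XP - phi b"
      unfolding downclosure_def top_Top phi_def using bP by blast
    show "XP - phi b \<subseteq> downclosure Top (\<subseteq>) {P}"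
    proof
      fix Q assume Q: "Q \<in> XP - phi b"
      have QX: "Q \<in> XP" and bQ: "b \<notin> Q" using Q unfolding phi_def by auto
      have pQ: "pf Q" using XP_pf QX .
      have "Q \<subseteq> P"
      proof
        fix x assume x: "x \<in> Q"
        have xA: "x \<in> A" using x pf_sub pQ by blast
        show "x \<in> P"
        proof (rule ccontr)
          assume "x \<notin> P"
          then have "x \<sqsubseteq> b" unfolding b_def using J_ub xA by blast
          then have "b \<in> Q" using pf_up[OF pQ x bA] by blast
          then show False using bQ by blast
        qed
      qed
      then show "Q \<in> downclosure Top (\<subseteq>) {P}" unfolding downclosure_def top_Top using QX by blast
    qed
  qed
  have "openin Top (XP - phi b)" using phi_copen[OF bA] .
  moreover have "closedin Top (XP - phi b)"
    unfolding closedin_def top_Top using phi_open[OF bA] phi_sub by (simp add: Diff_Diff_Int inf.absorb2)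
  ultimately show ?thesis unfolding eq clopenin_def by blast
qed

lemma phi_CSU: assumes k: "k \<in> compact_elems A le" shows "phi k \<in> ClopSUp Top (\<subseteq>)"
proof -
  have kA: "k \<in> A" using k unfolding compact_elems_def by blast
  have "minimals (\<subseteq>) (phi k) \<subseteq> spatial_part Top (\<subseteq>)"
  proof
    fix P assume P: "P \<in> minimals (\<subseteq>) (phi k)"
    have PX: "P \<in> XP" using P unfolding minimals_def phi_def by blast
    have "clopenin Top (downclosure Top (\<subseteq>) {P})"
      using down_pt[OF PX] min_cp[OF k P] by blast
    then show "P \<in> spatial_part Top (\<subseteq>)" unfolding spatial_part_def top_Top using PX by blast
  qed
  moreover have "upset Top (\<subseteq>) (phi k)" unfolding upset_def top_Top phi_def by blast
  ultimately show ?thesis unfolding ClopSUp_def scott_upset_def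
    using phi_clopen[OF kA] phi_closed[OF kA] by blast
qed

end



lemma hom_mono:
  assumes F1: "frame A1 le1" and F2: "frame A2 le2" and h: "frame_hom A1 le1 A2 le2 h"
    and x: "x \<in> A1" and y: "y \<in> A1" and xy: "le1 x y"
  shows "le2 (h x) (h y)"
proof -
  interpret B1: frm A1 le1 by (rule frm.intro[OF F1])
  interpret B2: frm A2 le2 by (rule frm.intro[OF F2])
  have hA: "\<And>z. z \<in> A1 \<Longrightarrow> h z \<in> A2" using h unfolding frame_hom_def by blast
  have hM: "h (fmeet A1 le1 x y) = fmeet A2 le2 (h x) (h y)" using h x y unfolding frame_hom_def by blast
  have "fmeet A1 le1 x y = x" using B1.le_iff_M x y xy by blast
  then have "fmeet A2 le2 (h x) (h y) = h x" using hM by simp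
  then show ?thesis using B2.le_iff_M hA x y by blast
qed

lemma inv_hom:
  assumes F1: "frame A1 le1" and F2: "frame A2 le2" and h: "frame_hom A1 le1 A2 le2 h"
    and gA: "\<And>y. y \<in> A2 \<Longrightarrow> g y \<in> A1" and gh: "\<And>x. x \<in> A1 \<Longrightarrow> g (h x) = x"
    and hg: "\<And>y. y \<in> A2 \<Longrightarrow> h (g y) = y"
  shows "frame_hom A2 le2 A1 le1 g"
proof -
  interpret B1: frm A1 le1 by (rule frm.intro[OF F1])
  interpret B2: frm A2 le2 by (rule frm.intro[OF F2])
  have htop: "h (ftop A1 le1) = ftop A2 le2" using h unfolding frame_hom_def by blast
  have hM: "\<And>a b. a \<in> A1 \<Longrightarrow> b \<in> A1 \<Longrightarrow> h (fmeet A1 le1 a b) = fmeet A2 le2 (h a) (h b)"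
    using h unfolding frame_hom_def by blast
  have hJ: "\<And>S. S \<subseteq> A1 \<Longrightarrow> h (fjoin A1 le1 S) = fjoin A2 le2 (h ` S)"
    using h unfolding frame_hom_def by blast
  show ?thesis unfolding frame_hom_def
  proof (intro conjI ballI allI impI)
    show "g y \<in> A1" if "y \<in> A2" for y using gA that .
    have "ftop A1 le1 \<in> A1" unfolding ftop_def by (rule B1.J_in) simp
    then show "g (ftop A2 le2) = ftop A1 le1" using htop gh by metis
    fix a b assume a: "a \<in> A2" and b: "b \<in> A2"
    have "fmeet A2 le2 a b = fmeet A2 le2 (h (g a)) (h (g b))" using hg a b by simp
    also have "\<dots> = h (fmeet A1 le1 (g a) (g b))" using hM gA a b by simp
    finally show "g (fmeet A2 le2 a b) = fmeet A1 le1 (g a) (g b)"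
      using gh B1.M_in gA a b by simp
  next
    fix S assume S: "S \<subseteq> A2"
    have gS: "g ` S \<subseteq> A1" using gA S by blast
    have "h ` g ` S = S" using hg S by (force simp: image_image)
    then have "fjoin A2 le2 S = h (fjoin A1 le1 (g ` S))" using hJ[OF gS] by simp
    then show "g (fjoin A2 le2 S) = fjoin A1 le1 (g ` S)" using gh B1.J_in[OF gS] by simp
  qed
qed

lemma iso_compact:
  assumes F1: "frame A1 le1" and F2: "frame A2 le2" and h: "frame_hom A1 le1 A2 le2 h"
    and g: "frame_hom A2 le2 A1 le1 g" and gh: "\<And>x. x \<in> A1 \<Longrightarrow> g (h x) = x"
    and hg: "\<And>y. y \<in> A2 \<Longrightarrow> h (g y) = y"
    and a: "a \<in> compact_elems A1 le1"
  shows "h a \<in> compact_elems A2 le2"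
proof -
  interpret B1: frm A1 le1 by (rule frm.intro[OF F1])
  interpret B2: frm A2 le2 by (rule frm.intro[OF F2])
  have aA: "a \<in> A1" and wb: "way_below A1 le1 a a" using a unfolding compact_elems_def by auto
  have hA: "\<And>z. z \<in> A1 \<Longrightarrow> h z \<in> A2" using h unfolding frame_hom_def by blast
  have gA: "\<And>z. z \<in> A2 \<Longrightarrow> g z \<in> A1" using g unfolding frame_hom_def by blast
  have hJ: "\<And>S. S \<subseteq> A1 \<Longrightarrow> h (fjoin A1 le1 S) = fjoin A2 le2 (h ` S)"
    using h unfolding frame_hom_def by blast
  have gJ: "\<And>S. S \<subseteq> A2 \<Longrightarrow> g (fjoin A2 le2 S) = fjoin A1 le1 (g ` S)"
    using g unfolding frame_hom_def by blast
  have "way_below A2 le2 (h a) (h a)" unfolding way_below_def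
  proof (intro allI impI)
    fix S assume S: "S \<subseteq> A2" and le: "le2 (h a) (fjoin A2 le2 S)"
    have gS: "g ` S \<subseteq> A1" using gA S by blast
    have "le1 (g (h a)) (g (fjoin A2 le2 S))"
      using hom_mono[OF F2 F1 g hA[OF aA] B2.J_in[OF S] le] .
    then have "le1 a (fjoin A1 le1 (g ` S))" using gh[OF aA] gJ[OF S] by simp
    moreover have "\<forall>S. S \<subseteq> A1 \<longrightarrow> le1 a (fjoin A1 le1 S) \<longrightarrow> (\<exists>T. T \<subseteq> S \<and> finite T \<and> le1 a (fjoin A1 le1 T))"
      using wb unfolding way_below_def .
    ultimately have "\<exists>T. T \<subseteq> g ` S \<and> finite T \<and> le1 a (fjoin A1 le1 T)" using gS by blast
    then obtain T where T: "T \<subseteq> g ` S" "finite T" "le1 a (fjoin A1 le1 T)" by blast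
    have TA: "T \<subseteq> A1" using T(1) gS by blast
    have "le2 (h a) (h (fjoin A1 le1 T))" using hom_mono[OF F1 F2 h aA B1.J_in[OF TA] T(3)] .
    then have "le2 (h a) (fjoin A2 le2 (h ` T))" using hJ[OF TA] by simp
    moreover have "h ` T \<subseteq> S"
    proof
      fix z assume "z \<in> h ` T"
      then obtain x where x: "x \<in> T" "z = h x" by blast
      then obtain y where y: "y \<in> S" "x = g y" using T(1) by blast
      have "z = y" using x(2) y(2) hg y(1) S by auto
      then show "z \<in> S" using y(1) by simp
    qed
    moreover have "finite (h ` T)" using T(2) by blast
    ultimately show "\<exists>T. T \<subseteq> S \<and> finite T \<and> le2 (h a) (fjoin A2 le2 T)" by blast
  qed
  then show ?thesis unfolding compact_elems_def using hA[OF aA] by blast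
qed

lemma part5:
  fixes A :: "'a set"
  assumes AF: "algebraic_frame A le"
  shows "\<exists>(T :: 'a set topology) leX. algebraic_L_space T leX \<and> alg_frame_iso A le (ClopUp T leX) (\<subseteq>)"
proof -
  have F: "frame A le" using AF unfolding algebraic_frame_def by blast
  have alg: "\<forall>a\<in>A. a = fjoin A le {b \<in> compact_elems A le. le b a}" using AF unfolding algebraic_frame_def by blast
  interpret B: frm A le by (rule frm.intro[OF F])
  interpret D: lsp B.Top "(\<subseteq>)" by (rule lsp.intro[OF B.Lsp_Top])
  have CU: "ClopUp B.Top (\<subseteq>) = B.phi ` A" by (rule B.CU_Top)
  have aL: "algebraic_L_space B.Top (\<subseteq>)"
    unfolding algebraic_L_space_def
  proof (intro conjI ballI)
    show "L_space B.Top (\<subseteq>)" by (rule B.Lsp_Top)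
    fix U assume U: "U \<in> ClopUp B.Top (\<subseteq>)"
    then obtain a where a: "a \<in> A" "U = B.phi a" using CU by blast
    define Ks where "Ks = {b \<in> compact_elems A le. le b a}"
    have Ks: "Ks \<subseteq> A" unfolding Ks_def compact_elems_def by blast
    have "U = B.phi (B.J Ks)" using alg a unfolding Ks_def by simp
    also have "\<dots> = B.Top closure_of \<Union>(B.phi ` Ks)" using B.cl_phi[OF Ks] by simp
    also have "\<dots> \<subseteq> B.Top closure_of (core B.Top (\<subseteq>) U)"
    proof (rule closure_of_mono)
      show "\<Union>(B.phi ` Ks) \<subseteq> core B.Top (\<subseteq>) U"
      proof
        fix P assume "P \<in> \<Union>(B.phi ` Ks)"
        then obtain k where k: "k \<in> Ks" "P \<in> B.phi k" by blast
        have kc: "k \<in> compact_elems A le" "le k a" using k unfolding Ks_def by auto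
        have "B.phi k \<subseteq> U" using B.phi_mono[OF _ a(1) kc(2)] Ks k(1) a(2) by blast
        then show "P \<in> core B.Top (\<subseteq>) U" unfolding core_def using B.phi_CSU[OF kc(1)] k(2) by blast
      qed
    qed
    finally show "U \<subseteq> B.Top closure_of (core B.Top (\<subseteq>) U)" .
  qed
  have inj: "inj_on B.phi A" unfolding inj_on_def using B.phi_inj by blast
  define g where "g U = inv_into A B.phi U" for U
  have gA: "\<And>U. U \<in> ClopUp B.Top (\<subseteq>) \<Longrightarrow> g U \<in> A" unfolding g_def CU by (rule inv_into_into)
  have gh: "\<And>a. a \<in> A \<Longrightarrow> g (B.phi a) = a" unfolding g_def using inv_into_f_f[OF inj] by blast
  have hg: "\<And>U. U \<in> ClopUp B.Top (\<subseteq>) \<Longrightarrow> B.phi (g U) = U" unfolding g_def CU by (rule f_inv_into_f)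
  have FC: "frame (ClopUp B.Top (\<subseteq>)) (\<subseteq>)" by (rule D.frameCU)
  have hom: "frame_hom A le (ClopUp B.Top (\<subseteq>)) (\<subseteq>) B.phi"
    unfolding frame_hom_def
  proof (intro conjI ballI allI impI)
    show "B.phi x \<in> ClopUp B.Top (\<subseteq>)" if "x \<in> A" for x using that CU by blast
    have "ftop A le = B.tp" unfolding ftop_def B.tp_def ..
    then show "B.phi (ftop A le) = ftop (ClopUp B.Top (\<subseteq>)) (\<subseteq>)"
      using B.phi_tp D.ftopCU B.top_Top by simp
    fix a b assume a: "a \<in> A" and b: "b \<in> A"
    have "fmeet (ClopUp B.Top (\<subseteq>)) (\<subseteq>) (B.phi a) (B.phi b) = B.phi a \<inter> B.phi b"
      using D.fmeetCU CU a b by blast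
    then show "B.phi (fmeet A le a b) = fmeet (ClopUp B.Top (\<subseteq>)) (\<subseteq>) (B.phi a) (B.phi b)"
      using B.phi_M[OF a b] by simp
  next
    fix S assume S: "S \<subseteq> A"
    have "B.phi ` S \<subseteq> ClopUp B.Top (\<subseteq>)" using S CU by blast
    then show "B.phi (fjoin A le S) = fjoin (ClopUp B.Top (\<subseteq>)) (\<subseteq>) (B.phi ` S)"
      using D.fjoinCU B.cl_phi[OF S] by simp
  qed
  have ghom: "frame_hom (ClopUp B.Top (\<subseteq>)) (\<subseteq>) A le g"
    by (rule inv_hom[OF F FC hom gA gh hg])
  have "coherent_frame_hom A le (ClopUp B.Top (\<subseteq>)) (\<subseteq>) B.phi"
    unfolding coherent_frame_hom_def using hom iso_compact[OF F FC hom ghom gh hg] by blast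
  moreover have "coherent_frame_hom (ClopUp B.Top (\<subseteq>)) (\<subseteq>) A le g"
    unfolding coherent_frame_hom_def using ghom iso_compact[OF FC F ghom hom hg gh] by blast
  ultimately have "alg_frame_iso A le (ClopUp B.Top (\<subseteq>)) (\<subseteq>)"
    unfolding alg_frame_iso_def using gh hg by blast
  then show ?thesis
    apply (intro exI[where x="B.Top"] exI[where x="(\<subseteq>)"])
    using aL by blast
qed

theorem theorem4p9:
  shows
   \<comment> \<open>ClopUp is a contravariant functor AlgLPries -> AlgFrm: on objects\<close>
   "(\<forall>(T :: 'b topology) le. algebraic_L_space T le \<longrightarrow> algebraic_frame (ClopUp T le) (\<subseteq>))
    \<comment> \<open>on morphisms (f maps to f^-1)\<close>
    \<and> (\<forall>(T1 :: 'b topology) le1 (T2 :: 'c topology) le2 f.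
         algebraic_L_space T1 le1 \<and> algebraic_L_space T2 le2 \<and> coherent_L_morphism T1 le1 T2 le2 f
         \<longrightarrow> coherent_frame_hom (ClopUp T2 le2) (\<subseteq>) (ClopUp T1 le1) (\<subseteq>)
                (\<lambda>U. {x \<in> topspace T1. f x \<in> U}))
    \<comment> \<open>faithful\<close>
    \<and> (\<forall>(T1 :: 'b topology) le1 (T2 :: 'c topology) le2 f g.
         algebraic_L_space T1 le1 \<and> algebraic_L_space T2 le2
         \<and> coherent_L_morphism T1 le1 T2 le2 f \<and> coherent_L_morphism T1 le1 T2 le2 g
         \<and> (\<forall>U \<in> ClopUp T2 le2. {x \<in> topspace T1. f x \<in> U} = {x \<in> topspace T1. g x \<in> U})
         \<longrightarrow> (\<forall>x \<in> topspace T1. f x = g x))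
    \<comment> \<open>full\<close>
    \<and> (\<forall>(T1 :: 'b topology) le1 (T2 :: 'c topology) le2 h.
         algebraic_L_space T1 le1 \<and> algebraic_L_space T2 le2
         \<and> coherent_frame_hom (ClopUp T2 le2) (\<subseteq>) (ClopUp T1 le1) (\<subseteq>) h
         \<longrightarrow> (\<exists>f. coherent_L_morphism T1 le1 T2 le2 f
                 \<and> (\<forall>U \<in> ClopUp T2 le2. h U = {x \<in> topspace T1. f x \<in> U})))
    \<comment> \<open>essentially surjective\<close>
    \<and> (\<forall>(A :: 'a set) le. algebraic_frame A le \<longrightarrow>
         (\<exists>(T :: 'a set topology) leX. algebraic_L_space T leX
              \<and> alg_frame_iso A le (ClopUp T leX) (\<subseteq>)))"
proof (intro conjI allI impI)
  fix T :: "'b topology" and le assume "algebraic_L_space T le"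
  then show "algebraic_frame (ClopUp T le) (\<subseteq>)" by (rule part1)
next
  fix T1 :: "'b topology" and le1 and T2 :: "'c topology" and le2 and f
  assume H: "algebraic_L_space T1 le1 \<and> algebraic_L_space T2 le2 \<and> coherent_L_morphism T1 le1 T2 le2 f"
  then have h1: "algebraic_L_space T1 le1" and h2: "algebraic_L_space T2 le2"
    and h3: "coherent_L_morphism T1 le1 T2 le2 f" by auto
  show "coherent_frame_hom (ClopUp T2 le2) (\<subseteq>) (ClopUp T1 le1) (\<subseteq>) (\<lambda>U. {x \<in> topspace T1. f x \<in> U})"
    by (rule part2[OF alspI[OF h1] alspI[OF h2] h3])
next
  fix T1 :: "'b topology" and le1 and T2 :: "'c topology" and le2 and f g
  assume H: "algebraic_L_space T1 le1 \<and> algebraic_L_space T2 le2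
         \<and> coherent_L_morphism T1 le1 T2 le2 f \<and> coherent_L_morphism T1 le1 T2 le2 g
         \<and> (\<forall>U \<in> ClopUp T2 le2. {x \<in> topspace T1. f x \<in> U} = {x \<in> topspace T1. g x \<in> U})"
  then have h1: "algebraic_L_space T1 le1" and h2: "algebraic_L_space T2 le2"
    and h3: "coherent_L_morphism T1 le1 T2 le2 f" and h4: "coherent_L_morphism T1 le1 T2 le2 g"
    and h5: "\<forall>U \<in> ClopUp T2 le2. {x \<in> topspace T1. f x \<in> U} = {x \<in> topspace T1. g x \<in> U}" by auto
  show "\<forall>x \<in> topspace T1. f x = g x"
    by (rule part3[OF alspI[OF h1] alspI[OF h2] h3 h4 h5])
next
  fix T1 :: "'b topology" and le1 and T2 :: "'c topology" and le2 and h
  assume H: "algebraic_L_space T1 le1 \<and> algebraic_L_space T2 le2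
         \<and> coherent_frame_hom (ClopUp T2 le2) (\<subseteq>) (ClopUp T1 le1) (\<subseteq>) h"
  then have h1: "algebraic_L_space T1 le1" and h2: "algebraic_L_space T2 le2"
    and h3: "coherent_frame_hom (ClopUp T2 le2) (\<subseteq>) (ClopUp T1 le1) (\<subseteq>) h" by auto
  show "\<exists>f. coherent_L_morphism T1 le1 T2 le2 f \<and> (\<forall>U \<in> ClopUp T2 le2. h U = {x \<in> topspace T1. f x \<in> U})"
    by (rule part4[OF alspI[OF h1] alspI[OF h2] h3])
next
  fix A :: "'a set" and le assume "algebraic_frame A le"
  then show "\<exists>(T :: 'a set topology) leX. algebraic_L_space T leX \<and> alg_frame_iso A le (ClopUp T leX) (\<subseteq>)"
    by (rule part5)
qed


end
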